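(* Let $F$ be a non-archimedean local field over a dyadic place $\mathfrak{p}$, with valuation ring $\mathfrak{o}$, and let $H\cong End(V)$ be a split quaternion algebra over $F$ ($V$ a $2$-dimensional $F$-vector space) with an orthogonal involution $\ddagger$. Let $\lambda\in disc(\ddagger)\cap\mathfrak{o}$ with $\lambda\mathfrak{o}=\iota(disc(\ddagger))$, and suppose $\mathfrak{d}(-\lambda)\neq\mathfrak{p}$. Let $\mathcal{O}$ be a maximal $\ddagger$-order. Then there exist a fractional ideal $\mathfrak{a}$ of $F$ and an $\mathfrak{a}$-modular lattice $\Lambda\subset V$ such that $$\mathcal{O}=End(\Lambda)\cap End(\Lambda^\sharp).$$ Additionally, $disc(\mathcal{O})=disc(H)\cap\iota(disc(\ddagger))=\mathfrak{o}$.
   Context: Orthogonal involution: $F$-linear anti-automorphism of order $2$ with $3$-dimensional $+1$-eigenspace. Orders are $\mathfrak{o}$-lattice subrings with $1$ spanning $H$; a $\ddagger$-order satisfies $\mathcal{O}^\ddagger=\mathcal{O}$; a maximal $\ddagger$-order is not properly contained in another $\ddagger$-order. $b_\ddagger$ is a nondegenerate symmetric bilinear form on $V$ (fixed up to scaling) with $b_\ddagger(v,\sigma w)=b_\ddagger(\sigma^\ddagger v,w)$. Lattices: finitely generated $\mathfrak{o}$-submodules spanning $V$; $\Lambda^\sharp=\{v:b_\ddagger(v,\Lambda)\subset\mathfrak{o}\}$; $End(\Lambda)=\{\sigma:\sigma\Lambda\subset\Lambda\}$. For a fractional ideal $\mathfrak{a}$, $\Lambda$ is $\mathfrak{a}$-modular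 if $\Lambda=\mathfrak{a}\Lambda^\sharp$. $disc(\mathcal{O})$ = reduced discriminant, $disc(H)=\mathfrak{o}$ (split). $disc(\ddagger)=nrd(h)(F^\times)^2$ for nonzero $h$ with $h^\ddagger=-h$; $\iota([\mu])$ = ideal of $\mathfrak{o}$ generated by $[\mu]\cap\mathfrak{o}$. Quadratic defect: $\mathfrak{d}(\alpha)=\bigcap_{\xi\in F}(\alpha-\xi^2)\mathfrak{o}$. *)

theory Defs
  imports "HOL-Analysis.Analysis"
begin

text \<open>A normalized discrete valuation v on a field (the value at 0 is irrelevant;
  0 is treated as having valuation +infinity throughout).\<close>
definition discrete_valuation :: "('a::field \<Rightarrow> int) \<Rightarrow> bool" where
  "discrete_valuation v \<longleftrightarrow>
     (\<forall>x y. x \<noteq> 0 \<longrightarrow> y \<noteq> 0 \<longrightarrow> v (x * y) = v x + v y) \<and>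
     (\<forall>x y. x \<noteq> 0 \<longrightarrow> y \<noteq> 0 \<longrightarrow> x + y \<noteq> 0 \<longrightarrow> min (v x) (v y) \<le> v (x + y)) \<and>
     (\<exists>\<pi>. \<pi> \<noteq> 0 \<and> v \<pi> = 1)"

definition vball :: "('a::field \<Rightarrow> int) \<Rightarrow> int \<Rightarrow> 'a set" where
  "vball v k = {x. x = 0 \<or> k \<le> v x}"

definition val_ring :: "('a::field \<Rightarrow> int) \<Rightarrow> 'a set" where
  "val_ring v = vball v 0"

definition max_ideal :: "('a::field \<Rightarrow> int) \<Rightarrow> 'a set" where
  "max_ideal v = vball v 1"

definition val_complete :: "('a::field \<Rightarrow> int) \<Rightarrow> bool" where
  "val_complete v \<longleftrightarrow>
     (\<forall>x :: nat \<Rightarrow> 'a.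
        (\<forall>k. \<exists>N. \<forall>m\<ge>N. \<forall>n\<ge>N. x m - x n \<in> vball v k) \<longrightarrow>
        (\<exists>L. \<forall>k. \<exists>N. \<forall>n\<ge>N. x n - L \<in> vball v k))"

definition finite_residue_field :: "('a::field \<Rightarrow> int) \<Rightarrow> bool" where
  "finite_residue_field v \<longleftrightarrow>
     (\<exists>S. finite S \<and> S \<subseteq> val_ring v \<and>
        (\<forall>x\<in>val_ring v. \<exists>s\<in>S. x - s \<in> max_ideal v))"

definition dyadic_local_field :: "('a::field_char_0 \<Rightarrow> int) \<Rightarrow> bool" where
  "dyadic_local_field v \<longleftrightarrow> discrete_valuation v \<and> val_complete v \<and>
     finite_residue_field v \<and> (2::'a) \<in> max_ideal v"

definition span_with :: "'r set \<Rightarrow> ('r \<Rightarrow> 'b \<Rightarrow> 'b::comm_monoid_add) \<Rightarrow> 'b set \<Rightarrow> 'b set" where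
  "span_with R sc S = {y. \<exists>T c. finite T \<and> T \<subseteq> S \<and> (\<forall>x\<in>T. c x \<in> R) \<and>
                            y = (\<Sum>x\<in>T. sc (c x) x)}"

definition o_lattice :: "('a::field \<Rightarrow> int) \<Rightarrow> ('a \<Rightarrow> 'b \<Rightarrow> 'b::comm_monoid_add) \<Rightarrow> 'b set \<Rightarrow> bool" where
  "o_lattice v sc L \<longleftrightarrow>
     (\<exists>S. finite S \<and> L = span_with (val_ring v) sc S) \<and> span_with UNIV sc L = UNIV"

definition frac_ideal :: "('a::field \<Rightarrow> int) \<Rightarrow> 'a set \<Rightarrow> bool" where
  "frac_ideal v I \<longleftrightarrow> o_lattice v (*) I"

definition ideal_gen :: "('a::field \<Rightarrow> int) \<Rightarrow> 'a set \<Rightarrow> 'a set" where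
  "ideal_gen v S = span_with (val_ring v) (*) S"

definition ideal_prod :: "('a::field \<Rightarrow> int) \<Rightarrow> 'a set \<Rightarrow> 'a set \<Rightarrow> 'a set" where
  "ideal_prod v I J = ideal_gen v {a * b | a b. a \<in> I \<and> b \<in> J}"

definition quad_defect :: "('a::field \<Rightarrow> int) \<Rightarrow> 'a \<Rightarrow> 'a set" where
  "quad_defect v \<alpha> = (\<Inter>\<xi>. {(\<alpha> - \<xi>\<^sup>2) * r | r. r \<in> val_ring v})"

definition hscale :: "'a::semiring_1 \<Rightarrow> 'a^2^2 \<Rightarrow> 'a^2^2" where
  "hscale c A = (\<chi> i j. c * A $ i $ j)"

text \<open>The +1-eigenspace of an involution has F-dimension 3 (explicit basis).\<close>
definition dim3 :: "('a::field^2^2) set \<Rightarrow> bool" where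
  "dim3 S \<longleftrightarrow> (\<exists>A1 A2 A3.
      (\<forall>c1 c2 c3. hscale c1 A1 + hscale c2 A2 + hscale c3 A3 = 0 \<longrightarrow>
                   c1 = 0 \<and> c2 = 0 \<and> c3 = 0) \<and>
      S = {hscale c1 A1 + hscale c2 A2 + hscale c3 A3 | c1 c2 c3. True})"

definition orthogonal_involution :: "('a::field^2^2 \<Rightarrow> 'a^2^2) \<Rightarrow> bool" where
  "orthogonal_involution dg \<longleftrightarrow>
     (\<forall>A B. dg (A + B) = dg A + dg B) \<and>
     (\<forall>c A. dg (hscale c A) = hscale c (dg A)) \<and>
     (\<forall>A B. dg (A ** B) = dg B ** dg A) \<and>
     (\<forall>A. dg (dg A) = A) \<and> dg \<noteq> id \<and>
     dim3 {A. dg A = A}"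

definition adapted_form :: "('a::field^2^2 \<Rightarrow> 'a^2^2) \<Rightarrow> ('a^2 \<Rightarrow> 'a^2 \<Rightarrow> 'a) \<Rightarrow> bool" where
  "adapted_form dg b \<longleftrightarrow>
     (\<forall>u v w. b (u + v) w = b u w + b v w) \<and>
     (\<forall>c v w. b (c *s v) w = c * b v w) \<and>
     (\<forall>v w. b v w = b w v) \<and>
     (\<forall>v. (\<forall>w. b v w = 0) \<longrightarrow> v = 0) \<and>
     (\<forall>\<sigma> v w. b v (\<sigma> *v w) = b (dg \<sigma> *v v) w)"

definition is_order :: "('a::field \<Rightarrow> int) \<Rightarrow> ('a^2^2) set \<Rightarrow> bool" where
  "is_order v Ord \<longleftrightarrow> o_lattice v hscale Ord \<and> mat 1 \<in> Ord \<and> (\<forall>A\<in>Ord. \<forall>B\<in>Ord. A ** B \<in> Ord)"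

definition inv_order :: "('a::field \<Rightarrow> int) \<Rightarrow> ('a^2^2 \<Rightarrow> 'a^2^2) \<Rightarrow> ('a^2^2) set \<Rightarrow> bool" where
  "inv_order v dg Ord \<longleftrightarrow> is_order v Ord \<and> dg ` Ord = Ord"

definition max_inv_order :: "('a::field \<Rightarrow> int) \<Rightarrow> ('a^2^2 \<Rightarrow> 'a^2^2) \<Rightarrow> ('a^2^2) set \<Rightarrow> bool" where
  "max_inv_order v dg Ord \<longleftrightarrow> inv_order v dg Ord \<and>
     (\<forall>Ord'. inv_order v dg Ord' \<and> Ord \<subseteq> Ord' \<longrightarrow> Ord' = Ord)"

definition dual_lattice :: "('a::field \<Rightarrow> int) \<Rightarrow> ('a^2 \<Rightarrow> 'a^2 \<Rightarrow> 'a) \<Rightarrow> ('a^2) set \<Rightarrow> ('a^2) set" where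
  "dual_lattice v b L = {x. \<forall>w\<in>L. b x w \<in> val_ring v}"

definition End_lat :: "('a::semiring_1^2) set \<Rightarrow> ('a^2^2) set" where
  "End_lat L = {\<sigma>. (\<lambda>x. \<sigma> *v x) ` L \<subseteq> L}"

definition ideal_times_lattice :: "('a::field \<Rightarrow> int) \<Rightarrow> 'a set \<Rightarrow> ('a^2) set \<Rightarrow> ('a^2) set" where
  "ideal_times_lattice v I L = span_with (val_ring v) (*s) {a *s x | a x. a \<in> I \<and> x \<in> L}"

definition modular_lattice ::
  "('a::field \<Rightarrow> int) \<Rightarrow> ('a^2 \<Rightarrow> 'a^2 \<Rightarrow> 'a) \<Rightarrow> 'a set \<Rightarrow> ('a^2) set \<Rightarrow> bool" where
  "modular_lattice v b I L \<longleftrightarrow> o_lattice v (*s) L \<and> L = ideal_times_lattice v I (dual_lattice v b L)"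

text \<open>Discriminant of the involution (square class of nrd(h), h nonzero skew) and iota.\<close>
definition disc_inv :: "('a::field^2^2 \<Rightarrow> 'a^2^2) \<Rightarrow> 'a set" where
  "disc_inv dg = (let h = (SOME h. h \<noteq> 0 \<and> dg h = - h) in {det h * c\<^sup>2 | c. c \<noteq> 0})"

definition iota :: "('a::field \<Rightarrow> int) \<Rightarrow> 'a set \<Rightarrow> 'a set" where
  "iota v D = ideal_gen v (D \<inter> val_ring v)"

definition disc_full :: "('a::field \<Rightarrow> int) \<Rightarrow> ('a^2^2) set \<Rightarrow> 'a set" where
  "disc_full v Ord = ideal_gen v
     {det (\<chi> (i::4) (j::4). trace (\<alpha> i ** \<alpha> j)) | \<alpha>. \<forall>i. \<alpha> i \<in> Ord}"

definition reduced_disc :: "('a::field \<Rightarrow> int) \<Rightarrow> ('a^2^2) set \<Rightarrow> 'a set" where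
  "reduced_disc v Ord = (THE D. frac_ideal v D \<and> ideal_prod v D D = disc_full v Ord)"

text \<open>disc(H) = o since H is split.\<close>
definition disc_H :: "('a::field \<Rightarrow> int) \<Rightarrow> 'a set" where
  "disc_H v = val_ring v"

end

theory Submission
  imports Defs
begin


locale dval =
  fixes v :: "'a::field_char_0 \<Rightarrow> int"
  assumes dv: "discrete_valuation v"
begin

abbreviation "Ov \<equiv> val_ring v"

lemma vmult: "x \<noteq> 0 \<Longrightarrow> y \<noteq> 0 \<Longrightarrow> v (x * y) = v x + v y"
  using dv unfolding discrete_valuation_def by blast

lemma vadd: "x \<noteq> 0 \<Longrightarrow> y \<noteq> 0 \<Longrightarrow> x + y \<noteq> 0 \<Longrightarrow> min (v x) (v y) \<le> v (x + y)"
  using dv unfolding discrete_valuation_def by blast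

lemma v1: "v 1 = 0"
  using vmult[of 1 1] by simp

lemma vinv: "x \<noteq> 0 \<Longrightarrow> v (inverse x) = - v x"
  using vmult[of x "inverse x"] v1 by simp

lemma vdiv: "x \<noteq> 0 \<Longrightarrow> y \<noteq> 0 \<Longrightarrow> v (x / y) = v x - v y"
  by (simp add: divide_inverse vmult vinv)

lemma vm1: "v (-1) = 0"
  using vmult[of "-1" "-1"] v1 by simp

lemma vneg: "v (- x) = v x"
proof (cases "x = 0")
  case True then show ?thesis by simp
next
  case False
  then show ?thesis using vmult[of "-1" x] vm1 by simp
qed

lemma vpow: "x \<noteq> 0 \<Longrightarrow> v (x ^ n) = int n * v x"
  by (induction n) (auto simp: v1 vmult algebra_simps)

lemma vstrict: "x \<noteq> 0 \<Longrightarrow> y \<noteq> 0 \<Longrightarrow> v x < v y \<Longrightarrow> x + y \<noteq> 0 \<and> v (x + y) = v x"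
proof -
  assume x: "x \<noteq> 0" and y: "y \<noteq> 0" and l: "v x < v y"
  have ne: "x + y \<noteq> 0"
  proof
    assume "x + y = 0" then have "y = - x" by (simp add: eq_neg_iff_add_eq_0 add.commute)
    then show False using l vneg by simp
  qed
  have 1: "min (v x) (v y) \<le> v (x + y)" using vadd x y ne by blast
  have 2: "min (v (x + y)) (v (-y)) \<le> v x"
    using vadd[of "x+y" "-y"] ne y x by simp
  show ?thesis using 1 2 l ne by (auto simp: vneg)
qed

lemma vsub_strict: "x \<noteq> 0 \<Longrightarrow> y \<noteq> 0 \<Longrightarrow> v x < v y \<Longrightarrow> x - y \<noteq> 0 \<and> v (x - y) = v x"
  using vstrict[of x "-y"] by (simp add: vneg)

definition pi :: 'a where "pi = (SOME p. p \<noteq> 0 \<and> v p = 1)"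

lemma pi: "pi \<noteq> 0" "v pi = 1"
proof -
  have "\<exists>p. p \<noteq> 0 \<and> v p = 1" using dv unfolding discrete_valuation_def by blast
  then have "pi \<noteq> 0 \<and> v pi = 1" unfolding pi_def by (rule someI_ex)
  then show "pi \<noteq> 0" "v pi = 1" by auto
qed

lemma pip_nz: "pi powi k \<noteq> 0"
  using pi power_int_not_zero by blast

lemma vpip: "v (pi powi k) = k"
proof (cases "k \<ge> 0")
  case True
  then obtain n where "k = int n" by (metis nonneg_eq_int)
  then show ?thesis using vpow[OF pi(1)] pi(2) by simp
next
  case False
  then obtain n where n: "k = - int n" by (metis nonpos_int_cases linorder_not_le less_imp_le)
  have "pi ^ n \<noteq> 0" using pi by simp
  then show ?thesis using vpow[OF pi(1), of n] pi(2) n by (simp add: power_int_minus vinv)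
qed

lemma pip_add: "pi powi (a + c) = pi powi a * pi powi c"
  using pi by (simp add: power_int_add)

lemma Ov_iff: "x \<in> Ov \<longleftrightarrow> x = 0 \<or> 0 \<le> v x"
  by (simp add: val_ring_def vball_def)

lemma O0[simp]: "0 \<in> Ov" and O1[simp]: "1 \<in> Ov"
  by (auto simp: Ov_iff v1)

lemma Oadd: "x \<in> Ov \<Longrightarrow> y \<in> Ov \<Longrightarrow> x + y \<in> Ov"
  unfolding Ov_iff using vadd[of x y] by fastforce

lemma Oneg: "x \<in> Ov \<Longrightarrow> - x \<in> Ov"
  unfolding Ov_iff by (auto simp: vneg)

lemma Osub: "x \<in> Ov \<Longrightarrow> y \<in> Ov \<Longrightarrow> x - y \<in> Ov"
  using Oadd[of x "-y"] Oneg by simp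

lemma Omult: "x \<in> Ov \<Longrightarrow> y \<in> Ov \<Longrightarrow> x * y \<in> Ov"
  unfolding Ov_iff by (cases "x = 0"; cases "y = 0") (auto simp: vmult)

lemma Osum: "(\<And>i. i \<in> A \<Longrightarrow> f i \<in> Ov) \<Longrightarrow> sum f A \<in> Ov"
  by (induction A rule: infinite_finite_induct) (auto intro: Oadd)

lemma Oprod: "(\<And>i. i \<in> A \<Longrightarrow> f i \<in> Ov) \<Longrightarrow> prod f A \<in> Ov"
  by (induction A rule: infinite_finite_induct) (auto intro: Omult)

lemma Oint: "of_int n \<in> Ov"
proof -
  have "of_nat m \<in> Ov" for m by (induction m) (auto intro: Oadd)
  then show ?thesis by (cases n rule: int_cases) (auto simp: Oneg Osub)
qed

lemma Opip: "k \<ge> 0 \<Longrightarrow> pi powi k \<in> Ov"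
  using vpip Ov_iff by auto

lemma Odiv: "x \<noteq> 0 \<Longrightarrow> y \<noteq> 0 \<Longrightarrow> v y \<le> v x \<Longrightarrow> x / y \<in> Ov"
  using vdiv Ov_iff by auto

lemma Ounit_inv: "x \<noteq> 0 \<Longrightarrow> v x = 0 \<Longrightarrow> inverse x \<in> Ov"
  using vinv Ov_iff by auto

end


definition inv2 :: "'a::field^2^2 \<Rightarrow> 'a^2^2" where
  "inv2 P = (\<chi> i j. (if i = 1 then (if j = 1 then P$2$2 else - P$1$2)
                     else (if j = 1 then - P$2$1 else P$1$1)) / det P)"

lemma inv2_nth: "inv2 P $ 1 $ 1 = P$2$2 / det P" "inv2 P $ 1 $ 2 = - P$1$2 / det P"
   "inv2 P $ 2 $ 1 = - P$2$1 / det P" "inv2 P $ 2 $ 2 = P$1$1 / det P"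
  by (simp_all add: inv2_def)

lemmas m2simps0 = vec_eq_iff forall_2 matrix_matrix_mult_def matrix_vector_mult_def sum_2 mat_def
  inv2_nth transpose_def
lemmas m2simps = m2simps0 det_2

lemma inv2_right: "det P \<noteq> 0 \<Longrightarrow> P ** inv2 P = mat 1"
  by (simp add: m2simps0 field_simps) (simp add: det_2 algebra_simps)

lemma inv2_left: "det P \<noteq> 0 \<Longrightarrow> inv2 P ** P = mat 1"
  by (simp add: m2simps0 field_simps) (simp add: det_2 algebra_simps)

lemma det_inv2: "det P \<noteq> 0 \<Longrightarrow> det (inv2 P) = 1 / det P"
  using det_mul[of "inv2 P" P] inv2_left[of P] by (simp add: field_simps)

lemma inv_unique: "(X::'a::field^2^2) ** M = mat 1 \<Longrightarrow> M ** Y = mat 1 \<Longrightarrow> X = Y"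
  by (metis matrix_mul_assoc matrix_mul_lid matrix_mul_rid)

lemma inv2_mult: "det A \<noteq> 0 \<Longrightarrow> det B \<noteq> 0 \<Longrightarrow> inv2 (A ** B) = inv2 B ** inv2 A"
proof -
  assume a: "det A \<noteq> 0" and b: "det B \<noteq> 0"
  have d: "det (A ** B) \<noteq> 0" using a b by (simp add: det_mul)
  have "(inv2 B ** inv2 A) ** (A ** B) = mat 1"
    by (metis a b inv2_left matrix_mul_assoc matrix_mul_lid)
  moreover have "(A ** B) ** inv2 (A ** B) = mat 1" using d inv2_right by blast
  ultimately show ?thesis using inv_unique by metis
qed

lemma mv_inv2: "det P \<noteq> 0 \<Longrightarrow> P *v (inv2 P *v x) = x"
  by (simp add: matrix_vector_mul_assoc inv2_right)

lemma inv2_mv: "det P \<noteq> 0 \<Longrightarrow> inv2 P *v (P *v x) = x"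
  by (simp add: matrix_vector_mul_assoc inv2_left)

context dval begin

definition intv :: "'a^2 \<Rightarrow> bool" where "intv x \<longleftrightarrow> (\<forall>i. x$i \<in> Ov)"
definition intm :: "'a^2^2 \<Rightarrow> bool" where "intm M \<longleftrightarrow> (\<forall>i j. M$i$j \<in> Ov)"

lemma intv2: "intv x \<longleftrightarrow> x$1 \<in> Ov \<and> x$2 \<in> Ov"
  by (auto simp: intv_def forall_2)

lemma intm2: "intm M \<longleftrightarrow> M$1$1 \<in> Ov \<and> M$1$2 \<in> Ov \<and> M$2$1 \<in> Ov \<and> M$2$2 \<in> Ov"
  by (auto simp: intm_def forall_2)

lemma intm_mv: "intm M \<Longrightarrow> intv x \<Longrightarrow> intv (M *v x)"
  by (simp add: intm2 intv2 matrix_vector_mult_def sum_2 Oadd Omult)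

lemma intm_mult: "intm M \<Longrightarrow> intm N \<Longrightarrow> intm (M ** N)"
  by (simp add: intm2 matrix_matrix_mult_def sum_2 Oadd Omult)

lemma intv_add: "intv x \<Longrightarrow> intv y \<Longrightarrow> intv (x + y)"
  by (simp add: intv2 Oadd)

lemma intv_scale: "c \<in> Ov \<Longrightarrow> intv x \<Longrightarrow> intv (c *s x)"
  by (simp add: intv2 Omult)

lemma intm_1: "intm (mat 1)"
  by (simp add: intm2 mat_def)

lemma intv_axis: "intv (axis i 1)"
  by (simp add: intv_def axis_def)

definition latP :: "'a^2^2 \<Rightarrow> ('a^2) set" where
  "latP P = {P *v x | x. intv x}"

lemma mv_axis: "((M::'b::semiring_1^2^2) *v axis j 1) $ i = M $ i $ j"
  using exhaust_2[of j] by (auto simp: matrix_vector_mult_def sum_2 axis_def)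

lemma col_eq: "(\<And>j. intv (M *v axis j 1)) \<Longrightarrow> intm M"
  unfolding intm_def intv_def by (metis mv_axis)

lemma End_latP: "det P \<noteq> 0 \<Longrightarrow> End_lat (latP P) = {\<sigma>. intm (inv2 P ** \<sigma> ** P)}"
proof (intro set_eqI iffI)
  fix \<sigma> assume d: "det P \<noteq> 0" and s: "\<sigma> \<in> End_lat (latP P)"
  have "intv ((inv2 P ** \<sigma> ** P) *v axis j 1)" for j
  proof -
    have "P *v axis j 1 \<in> latP P" unfolding latP_def using intv_axis by blast
    then have "\<sigma> *v (P *v axis j 1) \<in> latP P" using s unfolding End_lat_def by blast
    then obtain y where y: "intv y" "\<sigma> *v (P *v axis j 1) = P *v y" unfolding latP_def by blast
    have "(inv2 P ** \<sigma> ** P) *v axis j 1 = inv2 P *v (\<sigma> *v (P *v axis j 1))"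
      by (simp add: matrix_vector_mul_assoc matrix_mul_assoc)
    also have "\<dots> = y" using y d inv2_mv by simp
    finally show ?thesis using y by simp
  qed
  then show "\<sigma> \<in> {\<sigma>. intm (inv2 P ** \<sigma> ** P)}" using col_eq by blast
next
  fix \<sigma> assume d: "det P \<noteq> 0" and s: "\<sigma> \<in> {\<sigma>. intm (inv2 P ** \<sigma> ** P)}"
  show "\<sigma> \<in> End_lat (latP P)" unfolding End_lat_def mem_Collect_eq
  proof
    fix z assume "z \<in> (\<lambda>x. \<sigma> *v x) ` latP P"
    then obtain x where x: "intv x" "z = \<sigma> *v (P *v x)" unfolding latP_def by blast
    have "z = P *v ((inv2 P ** \<sigma> ** P) *v x)"
      using x d by (simp add: matrix_vector_mul_assoc inv2_right matrix_mul_assoc)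
    then show "z \<in> latP P" unfolding latP_def using intm_mv s x by auto
  qed
qed

end


definition bil :: "'a::comm_ring_1^2^2 \<Rightarrow> 'a^2 \<Rightarrow> 'a^2 \<Rightarrow> 'a" where
  "bil M x y = x$1*(M$1$1*y$1 + M$1$2*y$2) + x$2*(M$2$1*y$1 + M$2$2*y$2)"

lemma bil_right: "bil M x (A *v y) = bil (M ** A) x y"
  by (simp add: bil_def m2simps ring_distribs ac_simps)

lemma bil_left: "bil M (A *v x) y = bil (transpose A ** M) x y"
  by (simp add: bil_def m2simps ring_distribs ac_simps)

lemma bil_P: "bil M (P *v x) (P *v y) = bil (transpose P ** M ** P) x y"
  by (simp add: bil_left bil_right matrix_mul_assoc)

lemma bil_eq: "(\<And>x y. bil M x y = bil N x y) \<Longrightarrow> M = N"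
proof -
  assume h: "\<And>x y. bil M x y = bil N x y"
  have "M $ i $ j = N $ i $ j" for i j
    using h[of "axis i 1" "axis j 1"] exhaust_2[of i] exhaust_2[of j]
    by (auto simp: bil_def axis_def)
  then show ?thesis by (simp add: vec_eq_iff)
qed

definition Bs :: "('a::field^2 \<Rightarrow> 'a^2 \<Rightarrow> 'a) \<Rightarrow> 'a^2^2" where
  "Bs b = (\<chi> i j. b (axis i 1) (axis j 1))"

definition Gram :: "('a::field^2 \<Rightarrow> 'a^2 \<Rightarrow> 'a) \<Rightarrow> 'a^2^2 \<Rightarrow> 'a^2^2" where
  "Gram b P = transpose P ** Bs b ** P"

lemma vec2_decomp: "(x::'a::field^2) = x$1 *s axis 1 1 + x$2 *s axis 2 1"
  by (simp add: vec_eq_iff forall_2 axis_def)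

locale setting = dval v for v :: "'a::field_char_0 \<Rightarrow> int" +
  fixes dg :: "'a^2^2 \<Rightarrow> 'a^2^2" and b :: "'a^2 \<Rightarrow> 'a^2 \<Rightarrow> 'a"
  assumes oi: "orthogonal_involution dg" and af: "adapted_form dg b"
begin

lemmas afc = af[unfolded adapted_form_def]
lemma b_addL: "b (x + y) z = b x z + b y z" using conjunct1[OF afc] by blast
lemma b_scL: "b (c *s x) z = c * b x z" using conjunct1[OF conjunct2[OF afc]] by blast
lemma b_sym: "b x y = b y x" using conjunct1[OF conjunct2[OF conjunct2[OF afc]]] by blast
lemma b_nd: "(\<And>w. b x w = 0) \<Longrightarrow> x = 0" using conjunct1[OF conjunct2[OF conjunct2[OF conjunct2[OF afc]]]] by blast
lemma b_adj: "b x (\<sigma> *v y) = b (dg \<sigma> *v x) y" using conjunct2[OF conjunct2[OF conjunct2[OF conjunct2[OF afc]]]] by blast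

lemma b_addR: "b z (x + y) = b z x + b z y" using b_addL b_sym by metis
lemma b_scR: "b z (c *s x) = c * b z x" using b_scL b_sym by metis

lemma b_coord: "b x y = bil (Bs b) x y"
proof -
  have "b x y = b (x$1 *s axis 1 1 + x$2 *s axis 2 1) (y$1 *s axis 1 1 + y$2 *s axis 2 1)"
    by (rule arg_cong2[where f=b]; rule vec2_decomp)
  also have "\<dots> = bil (Bs b) x y"
    unfolding b_addL b_addR b_scL b_scR bil_def Bs_def vec_lambda_beta by (simp add: ring_distribs ac_simps)
  finally show ?thesis .
qed

lemma Bs_sym: "transpose (Bs b) = Bs b"
  by (simp add: Bs_def transpose_def vec_eq_iff b_sym)

lemma b_Gram: "b (P *v x) (P *v y) = bil (Gram b P) x y"
  by (simp add: b_coord bil_P Gram_def)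

lemma Gram_sym: "transpose (Gram b P) = Gram b P"
  by (simp add: Gram_def matrix_transpose_mul Bs_sym matrix_mul_assoc)

lemma Bs_adj: "Bs b ** \<sigma> = transpose (dg \<sigma>) ** Bs b"
  by (rule bil_eq) (metis b_adj b_coord bil_left bil_right)

lemma Gram_adj:
  assumes d: "det P \<noteq> 0"
  shows "Gram b P ** (inv2 P ** \<sigma> ** P) = transpose (inv2 P ** dg \<sigma> ** P) ** Gram b P"
proof (rule bil_eq)
  fix x y
  have 1: "P *v ((inv2 P ** \<sigma> ** P) *v y) = \<sigma> *v (P *v y)"
    using d by (simp add: matrix_vector_mul_assoc inv2_right matrix_mul_assoc)
  have 2: "P *v ((inv2 P ** dg \<sigma> ** P) *v x) = dg \<sigma> *v (P *v x)"
    using d by (simp add: matrix_vector_mul_assoc inv2_right matrix_mul_assoc)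
  have "bil (Gram b P ** (inv2 P ** \<sigma> ** P)) x y = bil (Gram b P) x ((inv2 P ** \<sigma> ** P) *v y)"
    by (simp add: bil_right)
  also have "\<dots> = b (P *v x) (\<sigma> *v (P *v y))" using 1 b_Gram by metis
  also have "\<dots> = b (dg \<sigma> *v (P *v x)) (P *v y)" by (rule b_adj)
  also have "\<dots> = bil (Gram b P) ((inv2 P ** dg \<sigma> ** P) *v x) y" using 2 b_Gram by metis
  also have "\<dots> = bil (transpose (inv2 P ** dg \<sigma> ** P) ** Gram b P) x y" by (simp add: bil_left)
  finally show "bil (Gram b P ** (inv2 P ** \<sigma> ** P)) x y = bil (transpose (inv2 P ** dg \<sigma> ** P) ** Gram b P) x y" .
qed

lemma det_Bs: "det (Bs b) \<noteq> 0"
proof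
  assume d0: "det (Bs b) = 0"
  let ?B = "Bs b"
  have s: "?B$2$1 = ?B$1$2" by (simp add: Bs_def b_sym)
  define x :: "'a^2" where "x = (\<chi> i. if i = 1 then ?B$1$2 else - ?B$1$1)"
  have "b x w = 0" for w
    using d0 s by (simp add: b_coord bil_def x_def det_2 algebra_simps)
  then have "x = 0" by (rule b_nd)
  then have z1: "?B$1$2 = 0" "?B$1$1 = 0" by (auto simp: x_def vec_eq_iff forall_2)
  define y :: "'a^2" where "y = (\<chi> i. if i = 1 then ?B$2$2 else 0)"
  have "b y w = 0" for w
    using z1 s by (simp add: b_coord bil_def y_def)
  then have "y = 0" by (rule b_nd)
  then have z2: "?B$2$2 = 0" by (auto simp: y_def vec_eq_iff forall_2)
  have "b (axis 1 1) w = 0" for w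
    using z1 z2 s by (simp add: b_coord bil_def axis_def)
  then have "axis 1 (1::'a) = (0::'a^2)" by (rule b_nd)
  then show False by (simp add: axis_eq_0_iff)
qed

end


lemma span_single: "y \<in> span_with R sc {a} \<Longrightarrow> y = 0 \<or> (\<exists>c\<in>R. y = sc c a)"
proof -
  assume "y \<in> span_with R sc {a}"
  then obtain T c where T: "finite T" "T \<subseteq> {a}" "\<forall>x\<in>T. c x \<in> R" "y = (\<Sum>x\<in>T. sc (c x) x)"
    unfolding span_with_def by blast
  then have "T = {} \<or> T = {a}" by blast
  then show ?thesis using T by auto
qed

lemma span_mem: "a \<in> S \<Longrightarrow> r \<in> R \<Longrightarrow> sc r a \<in> span_with R sc S"
  unfolding span_with_def by (rule CollectI, rule exI[of _ "{a}"], rule exI[of _ "\<lambda>_. r"]) auto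

lemma hscale_m1: "hscale (-1) A = - (A::'a::ring_1^2^2)"
  by (simp add: hscale_def vec_eq_iff)

context setting begin

lemmas oic = oi[unfolded orthogonal_involution_def]
lemma dg_add: "dg (A + B) = dg A + dg B" using conjunct1[OF oic] by blast
lemma dg_sc: "dg (hscale c A) = hscale c (dg A)" using conjunct1[OF conjunct2[OF oic]] by blast
lemma dg_mult: "dg (A ** B) = dg B ** dg A" using conjunct1[OF conjunct2[OF conjunct2[OF oic]]] by blast
lemma dg_dg: "dg (dg A) = A" using conjunct1[OF conjunct2[OF conjunct2[OF conjunct2[OF oic]]]] by blast
lemma dg_ne: "dg \<noteq> id" using conjunct1[OF conjunct2[OF conjunct2[OF conjunct2[OF conjunct2[OF oic]]]]] by blast

lemma dg_neg: "dg (- A) = - dg A"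
  using dg_sc[of "-1" A] by (simp add: hscale_m1)

lemma dg_diff: "dg (A - B) = dg A - dg B"
  using dg_add[of A "- B"] dg_neg[of B] by simp

definition h0 where "h0 = (SOME h. h \<noteq> 0 \<and> dg h = - h)"

lemma h0: "h0 \<noteq> 0" "dg h0 = - h0"
proof -
  obtain A where A: "dg A \<noteq> A" using dg_ne by (metis eq_id_iff)
  have "A - dg A \<noteq> 0 \<and> dg (A - dg A) = - (A - dg A)" using A by (simp add: dg_diff dg_dg)
  then have "\<exists>h. h \<noteq> 0 \<and> dg h = - h" by blast
  then have "h0 \<noteq> 0 \<and> dg h0 = - h0" unfolding h0_def by (rule someI_ex)
  then show "h0 \<noteq> 0" "dg h0 = - h0" by auto
qed

lemma disc_inv_eq: "disc_inv dg = {det h0 * c\<^sup>2 | c. c \<noteq> 0}"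
  by (simp add: disc_inv_def h0_def Let_def)

lemma skew_key: "\<exists>k. k \<noteq> 0 \<and> det (Bs b) * det h0 = k\<^sup>2"
proof -
  define K where "K = Bs b ** h0"
  have K1: "K = - (transpose h0 ** Bs b)"
    unfolding K_def Bs_adj h0(2) by (simp add: vec_eq_iff matrix_matrix_mult_def transpose_def sum_negf)
  have K2: "transpose K = transpose h0 ** Bs b"
    unfolding K_def by (simp add: matrix_transpose_mul Bs_sym)
  have anti: "transpose K = - K" using K1 K2 by simp
  have e11: "K$1$1 = 0" using arg_cong[OF anti, of "\<lambda>M. M$1$1"] by (simp add: transpose_def)
  have e22: "K$2$2 = 0" using arg_cong[OF anti, of "\<lambda>M. M$2$2"] by (simp add: transpose_def)
  have e21: "K$2$1 = - K$1$2" using arg_cong[OF anti, of "\<lambda>M. M$1$2"] by (simp add: transpose_def)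
  have dK: "det K = (K$1$2)\<^sup>2" using e11 e22 e21 by (simp add: det_2 power2_eq_square)
  have dm: "det K = det (Bs b) * det h0" unfolding K_def by (rule det_mul)
  have "K$1$2 \<noteq> 0"
  proof
    assume z: "K$1$2 = 0"
    then have "K = 0" using e11 e22 e21 by (simp add: vec_eq_iff forall_2)
    then have "inv2 (Bs b) ** K = 0" by (simp add: vec_eq_iff matrix_matrix_mult_def)
    moreover have "inv2 (Bs b) ** K = h0" unfolding K_def using det_Bs
      by (simp add: matrix_mul_assoc inv2_left)
    ultimately show False using h0(1) by simp
  qed
  then show ?thesis using dK dm by metis
qed

lemma det_h0: "det h0 \<noteq> 0"
  using skew_key by auto

end

context dval begin

lemma qd_odd:
  assumes l: "l \<noteq> 0" "v l = 1"
  shows "quad_defect v (-l) = max_ideal v"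
proof (rule set_eqI, rule iffI)
  fix y assume "y \<in> quad_defect v (-l)"
  then have "y \<in> {(-l - 0\<^sup>2) * r | r. r \<in> Ov}" unfolding quad_defect_def by blast
  then obtain r where r: "r \<in> Ov" "y = (-l) * r" by auto
  show "y \<in> max_ideal v"
  proof (cases "r = 0")
    case True then show ?thesis using r by (simp add: max_ideal_def vball_def)
  next
    case False
    then have "v y = 1 + v r" using r l by (simp add: vmult vneg)
    then show ?thesis using r False by (simp add: max_ideal_def vball_def Ov_iff)
  qed
next
  fix y assume y: "y \<in> max_ideal v"
  have "\<exists>r\<in>Ov. y = (-l - \<xi>\<^sup>2) * r" for \<xi>
  proof -
    define w where "w = -l - \<xi>\<^sup>2"
    have w: "w \<noteq> 0 \<and> v w \<le> 1"
    proof (cases "\<xi> = 0")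
      case True then show ?thesis using l by (simp add: w_def vneg)
    next
      case False
      have x2: "\<xi>\<^sup>2 \<noteq> 0" "v (\<xi>\<^sup>2) = 2 * v \<xi>" using False vpow[of \<xi> 2] by auto
      show ?thesis
      proof (cases "1 \<le> v \<xi>")
        case True
        then have "v (-l) < v (\<xi>\<^sup>2)" using x2 l by (simp add: vneg)
        then show ?thesis using vsub_strict[of "-l" "\<xi>\<^sup>2"] l x2 by (simp add: w_def vneg)
      next
        case f: False
        then have "v (-(\<xi>\<^sup>2)) < v (-l)" using x2 l by (simp add: vneg)
        then have "-(\<xi>\<^sup>2) + -l \<noteq> 0 \<and> v (-(\<xi>\<^sup>2) + -l) = v (-(\<xi>\<^sup>2))"
          using vstrict[of "-(\<xi>\<^sup>2)" "-l"] l x2 by simp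
        moreover have "w = -(\<xi>\<^sup>2) + -l" by (simp add: w_def)
        ultimately show ?thesis using x2 f by (simp add: vneg)
      qed
    qed
    show ?thesis
    proof (cases "y = 0")
      case True then show ?thesis by (intro bexI[of _ 0]) (auto simp: w_def)
    next
      case False
      then have "1 \<le> v y" using y by (simp add: max_ideal_def vball_def)
      then have "y / w \<in> Ov" using Odiv[of y w] w False by simp
      moreover have "y = w * (y / w)" using w by simp
      ultimately show ?thesis unfolding w_def by blast
    qed
  qed
  then show "y \<in> quad_defect v (-l)" unfolding quad_defect_def by blast
qed

end

context setting begin

lemma lam_unit:
  assumes l1: "lam \<in> disc_inv dg \<inter> Ov"
    and l2: "ideal_gen v {lam} = iota v (disc_inv dg)"
    and l3: "quad_defect v (- lam) \<noteq> max_ideal v"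
  shows "lam \<noteq> 0 \<and> v lam = 0"
proof -
  obtain c where c: "c \<noteq> 0" "lam = det h0 * c\<^sup>2" using l1 disc_inv_eq by auto
  have lnz: "lam \<noteq> 0" using c det_h0 by simp
  define q where "q = v lam div 2"
  define r where "r = v lam mod 2"
  have vl: "v lam = 2 * q + r" and r01: "r = 0 \<or> r = 1" unfolding q_def r_def by auto
  define c' where "c' = c / pi powi q"
  have c'nz: "c' \<noteq> 0" using c pip_nz by (simp add: c'_def)
  define u where "u = det h0 * c'\<^sup>2"
  have pq: "(pi powi q)\<^sup>2 = pi powi (2 * q)"
    by (metis mult_2 pip_add power2_eq_square)
  have u: "u = lam / pi powi (2*q)"
    unfolding u_def c'_def c(2) by (simp add: power_divide pq)
  have unz: "u \<noteq> 0" using lnz pip_nz u by simp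
  have vu: "v u = r" using u vdiv[OF lnz pip_nz] vpip vl by simp
  have uD: "u \<in> disc_inv dg" unfolding disc_inv_eq u_def using c'nz by blast
  have uO: "u \<in> Ov" using vu r01 by (auto simp: Ov_iff)
  have "u \<in> iota v (disc_inv dg)"
    unfolding iota_def ideal_gen_def using span_mem[of u "disc_inv dg \<inter> Ov" 1 Ov "(*)"] uD uO by simp
  then have "u \<in> span_with Ov (*) {lam}" using l2 by (simp add: ideal_gen_def)
  then obtain t where t: "t \<in> Ov" "u = t * lam" using span_single unz by blast
  have tnz: "t \<noteq> 0" using t unz by auto
  have "v u = v t + v lam" using t tnz lnz vmult by simp
  then have "v t = - 2 * q" using vu vl by simp
  moreover have "v t \<ge> 0" using t tnz Ov_iff by auto
  moreover have "v lam \<ge> 0" using l1 lnz Ov_iff by auto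
  ultimately have q0: "q = 0" using vl r01 by auto
  show ?thesis
  proof (cases "r = 0")
    case True then show ?thesis using lnz vl q0 by simp
  next
    case False
    then have "v lam = 1" using r01 vl q0 by simp
    then show ?thesis using qd_odd[OF lnz] l3 by simp
  qed
qed

lemma iota_eq:
  assumes "lam \<noteq> 0" "v lam = 0" "ideal_gen v {lam} = iota v (disc_inv dg)"
  shows "iota v (disc_inv dg) = Ov"
proof -
  have "span_with Ov (*) {lam} = Ov"
  proof (intro set_eqI iffI)
    fix x assume "x \<in> span_with Ov (*) {lam}"
    moreover have "lam \<in> Ov" using assms Ov_iff by simp
    ultimately show "x \<in> Ov" using span_single[of x Ov "(*)" lam] Omult by auto
  next
    fix x assume x: "x \<in> Ov"
    have "x / lam \<in> Ov"
    proof (cases "x = 0")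
      case False then show ?thesis using Odiv[of x lam] x assms Ov_iff by auto
    qed simp
    then have "(x / lam) * lam \<in> span_with Ov (*) {lam}" by (rule span_mem[rotated]) simp
    then show "x \<in> span_with Ov (*) {lam}" using assms by simp
  qed
  then show ?thesis using assms by (simp add: ideal_gen_def)
qed

end


definition cols :: "'a::field^2 \<Rightarrow> 'a^2 \<Rightarrow> 'a^2^2" where
  "cols f g = (\<chi> i j. if j = 1 then f$i else g$i)"

lemma cols_mv: "cols f g *v x = x$1 *s f + x$2 *s g"
  by (simp add: cols_def vec_eq_iff forall_2 matrix_vector_mult_def sum_2 mult.commute)

lemma det_cols: "det (cols f g) = f$1 * g$2 - g$1 * f$2"
  by (simp add: cols_def det_2)

context dval begin

lemma least_v:
  assumes "x0 \<in> N" "Q x0" "\<And>x. x \<in> N \<Longrightarrow> Q x \<Longrightarrow> f x \<noteq> 0 \<and> f x \<in> Ov"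
  shows "\<exists>x\<in>N. Q x \<and> (\<forall>y\<in>N. Q y \<longrightarrow> v (f x) \<le> v (f y))"
proof -
  obtain x where x: "x \<in> N \<and> Q x" "\<forall>y. y \<in> N \<and> Q y \<longrightarrow> nat (v (f x)) \<le> nat (v (f y))"
    using ex_has_least_nat[of "\<lambda>x. x \<in> N \<and> Q x" x0 "\<lambda>x. nat (v (f x))"] assms(1,2) by blast
  have pos: "y \<in> N \<Longrightarrow> Q y \<Longrightarrow> 0 \<le> v (f y)" for y using assms(3)[of y] Ov_iff by auto
  have "\<forall>y\<in>N. Q y \<longrightarrow> v (f x) \<le> v (f y)"
  proof (intro ballI impI)
    fix y assume "y \<in> N" "Q y"
    then show "v (f x) \<le> v (f y)" using x pos[of x] pos[of y] by fastforce
  qed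
  then show ?thesis using x by blast
qed

lemma hermite:
  assumes add: "\<And>x y. x \<in> N \<Longrightarrow> y \<in> N \<Longrightarrow> x + y \<in> N"
    and sc: "\<And>c x. c \<in> Ov \<Longrightarrow> x \<in> N \<Longrightarrow> c *s x \<in> N"
    and int: "\<And>x. x \<in> N \<Longrightarrow> intv x"
    and e1: "x1 \<in> N" "x1$1 \<noteq> 0"
    and e2: "x2 \<in> N" "x2$1 = 0" "x2$2 \<noteq> 0"
  shows "\<exists>P. det P \<noteq> 0 \<and> latP P = N"
proof -
  obtain f where f: "f \<in> N" "f$1 \<noteq> 0" and fmin: "\<And>y. y \<in> N \<Longrightarrow> y$1 \<noteq> 0 \<Longrightarrow> v (f$1) \<le> v (y$1)"
    using least_v[of x1 N "\<lambda>x. x$1 \<noteq> 0" "\<lambda>x. x$1"] e1 int by (auto simp: intv2)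
  obtain g where g: "g \<in> N" "g$1 = 0" "g$2 \<noteq> 0" and gmin: "\<And>y. y \<in> N \<Longrightarrow> y$1 = 0 \<Longrightarrow> y$2 \<noteq> 0 \<Longrightarrow> v (g$2) \<le> v (y$2)"
    using least_v[of x2 N "\<lambda>x. x$1 = 0 \<and> x$2 \<noteq> 0" "\<lambda>x. x$2"] e2 int by (auto simp: intv2)
  define P where "P = cols f g"
  have dP: "det P \<noteq> 0" using f g by (simp add: P_def det_cols)
  have "latP P = N"
  proof (intro set_eqI iffI)
    fix y assume "y \<in> latP P"
    then obtain x where x: "intv x" "y = P *v x" unfolding latP_def by blast
    then show "y \<in> N" using add sc f g by (simp add: P_def cols_mv intv2)
  next
    fix y assume y: "y \<in> N"
    define s where "s = y$1 / f$1"
    have s: "s \<in> Ov"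
    proof (cases "y$1 = 0")
      case False then show ?thesis using Odiv[of "y$1" "f$1"] fmin[OF y] f by (simp add: s_def)
    qed (simp add: s_def)
    define z where "z = y + (- s) *s f"
    have z: "z \<in> N" unfolding z_def using add sc y s f Oneg by blast
    have z1: "z$1 = 0" using f by (simp add: z_def s_def)
    define t where "t = z$2 / g$2"
    have t: "t \<in> Ov"
    proof (cases "z$2 = 0")
      case False then show ?thesis using Odiv[of "z$2" "g$2"] gmin[OF z z1] g by (simp add: t_def)
    qed (simp add: t_def)
    have "y = P *v (\<chi> i. if i = 1 then s else t)"
      using f g z1 by (simp add: P_def cols_mv vec_eq_iff forall_2 t_def z_def s_def)
    moreover have "intv (\<chi> i. if i = 1 then s else t)" using s t by (simp add: intv2)
    ultimately show "y \<in> latP P" unfolding latP_def by blast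
  qed
  then show ?thesis using dP by blast
qed

end

lemma span_withE:
  assumes "y \<in> span_with R sc S"
  obtains T c where "finite T" "T \<subseteq> S" "\<forall>x\<in>T. c x \<in> R" "y = (\<Sum>x\<in>T. sc (c x) x)"
  using assms unfolding span_with_def by blast

lemma hscale_sum_nth: "(\<Sum>x\<in>T. hscale (c x) x) $ i $ j = (\<Sum>x\<in>T. c x * x $ i $ j)"
  by (simp add: hscale_def)

lemma mv_smult: "A *v (c *s x) = c *s (A *v (x::'a::comm_ring_1^'n))"
  by (simp add: vec_eq_iff matrix_vector_mult_def sum_distrib_left ac_simps)

lemma hscale_mv: "hscale c A *v x = c *s (A *v x)"
  by (simp add: vec_eq_iff matrix_vector_mult_def sum_distrib_left ac_simps hscale_def)

context dval begin

lemma order_bound: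
  assumes fin: "finite S"
  shows "\<exists>K\<ge>0. \<forall>\<sigma>\<in>span_with Ov hscale S. intm (hscale (pi powi K) \<sigma>)"
proof -
  define E where "E = (\<lambda>(s, i, j). s $ i $ j) ` (S \<times> UNIV \<times> UNIV)"
  have fE: "finite E" unfolding E_def using fin by simp
  define K where "K = Max (insert 0 ((\<lambda>e. - v e) ` E))"
  have K0: "K \<ge> 0" unfolding K_def using fE by simp
  have Ks: "pi powi K * s $ i $ j \<in> Ov" if "s \<in> S" for s i j
  proof (cases "s $ i $ j = 0")
    case False
    have "s $ i $ j \<in> E" unfolding E_def using that by (intro image_eqI[of _ _ "(s, i, j)"]) auto
    then have "- v (s $ i $ j) \<le> K" unfolding K_def using fE by simp
    then show ?thesis using False pip_nz vmult vpip Ov_iff by simp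
  qed simp
  have "intm (hscale (pi powi K) \<sigma>)" if sig: "\<sigma> \<in> span_with Ov hscale S" for \<sigma>
  proof -
    obtain T c where T: "finite T" "T \<subseteq> S" "\<forall>x\<in>T. c x \<in> Ov" "\<sigma> = (\<Sum>x\<in>T. hscale (c x) x)"
      using sig by (rule span_withE)
    have "(hscale (pi powi K) \<sigma>) $ i $ j = (\<Sum>x\<in>T. c x * (pi powi K * x $ i $ j))" for i j
      by (simp add: T(4) hscale_def sum_distrib_left ac_simps)
    moreover have "(\<Sum>x\<in>T. c x * (pi powi K * x $ i $ j)) \<in> Ov" for i j
      by (rule Osum) (metis T(2,3) Ks Omult subsetD)
    ultimately show ?thesis unfolding intm_def by simp
  qed
  then show ?thesis using K0 by blast
qed

lemma exists_P:
  assumes ord: "is_order v Ord"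
  shows "\<exists>P. det P \<noteq> 0 \<and> (\<forall>\<sigma>\<in>Ord. intm (inv2 P ** \<sigma> ** P))"
proof -
  obtain S where S: "finite S" "Ord = span_with Ov hscale S"
    using ord unfolding is_order_def o_lattice_def by blast
  have one: "mat 1 \<in> Ord" and mul: "\<And>A B. A \<in> Ord \<Longrightarrow> B \<in> Ord \<Longrightarrow> A ** B \<in> Ord"
    using ord unfolding is_order_def by auto
  obtain K where K: "K \<ge> 0" "\<And>\<sigma>. \<sigma> \<in> Ord \<Longrightarrow> intm (hscale (pi powi K) \<sigma>)"
    using order_bound[OF S(1)] S(2) by blast
  define N where "N = {x. intv x \<and> (\<forall>\<sigma>\<in>Ord. intv (\<sigma> *v x))}"
  have add: "x + y \<in> N" if "x \<in> N" "y \<in> N" for x y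
    using that by (simp add: N_def intv_add matrix_vector_right_distrib)
  have sc: "c *s x \<in> N" if "c \<in> Ov" "x \<in> N" for c x
    using that by (simp add: N_def intv_scale mv_smult)
  have int: "intv x" if "x \<in> N" for x using that by (simp add: N_def)
  have ax: "(pi powi K) *s axis i 1 \<in> N" for i
  proof -
    have "intv (\<sigma> *v ((pi powi K) *s axis i 1))" if "\<sigma> \<in> Ord" for \<sigma>
      using intm_mv[OF K(2)[OF that] intv_axis[of i]] by (simp add: mv_smult hscale_mv)
    moreover have "intv ((pi powi K) *s axis i 1)" using intv_scale[OF Opip[OF K(1)] intv_axis] .
    ultimately show ?thesis by (simp add: N_def)
  qed
  obtain P where P: "det P \<noteq> 0" "latP P = N"
    using hermite[of N "(pi powi K) *s axis 1 1" "(pi powi K) *s axis 2 1", OF add sc int ax _ ax]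
      pip_nz by (auto simp: axis_def)
  have "\<sigma> \<in> End_lat (latP P)" if s: "\<sigma> \<in> Ord" for \<sigma>
    unfolding End_lat_def P(2)
  proof (clarify)
    fix x assume x: "x \<in> N"
    have "intv (\<tau> *v (\<sigma> *v x))" if "\<tau> \<in> Ord" for \<tau>
      using x mul[OF that s] by (simp add: N_def matrix_vector_mul_assoc)
    then show "\<sigma> *v x \<in> N" using x s by (simp add: N_def)
  qed
  then show ?thesis using End_latP[OF P(1)] P(1) by blast
qed

end


definition shearQ :: "'a::field \<Rightarrow> 'a^2^2" where
  "shearQ t = (\<chi> i j. if i = j then 1 else if i = 1 then t else 0)"
definition diagD :: "'a::field \<Rightarrow> 'a^2^2" where
  "diagD s = (\<chi> i j. if i = j then (if i = 1 then 1 else s) else 0)"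
definition swapS :: "'a::field^2^2" where
  "swapS = (\<chi> i j. if i = j then 0 else 1)"

lemma shearQ_nth[simp]: "shearQ t $ 1 $ 1 = 1" "shearQ t $ 1 $ 2 = t" "shearQ t $ 2 $ 1 = 0" "shearQ t $ 2 $ 2 = 1"
  by (simp_all add: shearQ_def)
lemma diagD_nth[simp]: "diagD s $ 1 $ 1 = 1" "diagD s $ 1 $ 2 = 0" "diagD s $ 2 $ 1 = 0" "diagD s $ 2 $ 2 = s"
  by (simp_all add: diagD_def)
lemma swapS_nth[simp]: "swapS $ 1 $ 1 = (0::'a::field)" "swapS $ 1 $ 2 = (1::'a)" "swapS $ 2 $ 1 = (1::'a)" "swapS $ 2 $ 2 = (0::'a)"
  by (simp_all add: swapS_def)

lemma det_shearQ: "det (shearQ t) = 1" by (simp add: det_2)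
lemma det_diagD: "det (diagD s) = s" by (simp add: det_2)
lemma det_swapS: "det (swapS :: 'a::field^2^2) = -1" by (simp add: det_2)

context dval begin

lemma vb_iff: "x \<in> vball v k \<longleftrightarrow> x = 0 \<or> k \<le> v x" by (simp add: vball_def)
lemma Ov_vb: "Ov = vball v 0" by (simp add: val_ring_def)

lemma vb_add: "x \<in> vball v k \<Longrightarrow> y \<in> vball v k \<Longrightarrow> x + y \<in> vball v k"
  unfolding vb_iff using vadd[of x y] by fastforce

lemma vb_neg: "x \<in> vball v k \<Longrightarrow> - x \<in> vball v k"
  unfolding vb_iff by (auto simp: vneg)

lemma vb_sub: "x \<in> vball v k \<Longrightarrow> y \<in> vball v k \<Longrightarrow> x - y \<in> vball v k"
  using vb_add[of x k "-y"] vb_neg by simp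

lemma vb_mult: "x \<in> vball v k \<Longrightarrow> y \<in> vball v l \<Longrightarrow> x * y \<in> vball v (k + l)"
  unfolding vb_iff by (cases "x = 0"; cases "y = 0") (auto simp: vmult)

lemma vb_mono: "x \<in> vball v l \<Longrightarrow> k \<le> l \<Longrightarrow> x \<in> vball v k"
  unfolding vb_iff by auto

lemma vb_div: "x \<in> vball v k \<Longrightarrow> y \<noteq> 0 \<Longrightarrow> x / y \<in> vball v (k - v y)"
  unfolding vb_iff by (cases "x = 0") (auto simp: vdiv)

lemma vb_pip: "pi powi j \<in> vball v j"
  by (simp add: vb_iff vpip)

lemma vb_self: "x \<in> vball v (v x)"
  by (simp add: vb_iff)

lemma vb_pip_mult: "x \<in> vball v k \<Longrightarrow> pi powi j * x \<in> vball v (j + k)"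
  using vb_mult[OF vb_pip] by blast

lemma O_vb: "x \<in> Ov \<longleftrightarrow> x \<in> vball v 0" by (simp add: Ov_vb)

end

context setting begin

lemma Gram_mult: "Gram b (P ** Q) = transpose Q ** Gram b P ** Q"
  by (simp add: Gram_def matrix_transpose_mul matrix_mul_assoc)

lemma Gram_21: "Gram b P $ 2 $ 1 = Gram b P $ 1 $ 2"
  using arg_cong[OF Gram_sym[of P], of "\<lambda>M. M$1$2"] by (simp add: transpose_def)

lemma det_Gram: "det (Gram b P) = (det P)\<^sup>2 * det (Bs b)"
  by (simp add: Gram_def det_mul det_transpose power2_eq_square)

lemma good_mult:
  assumes "det P \<noteq> 0" "det Q \<noteq> 0" "intm Q" "intm (inv2 Q)" "intm (inv2 P ** \<sigma> ** P)"
  shows "intm (inv2 (P ** Q) ** \<sigma> ** (P ** Q))"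
proof -
  have "inv2 (P ** Q) ** \<sigma> ** (P ** Q) = inv2 Q ** (inv2 P ** \<sigma> ** P) ** Q"
    using assms by (simp add: inv2_mult matrix_mul_assoc)
  then show ?thesis using assms by (simp add: intm_mult)
qed

end

lemma hscale_hscale: "hscale a (hscale c A) = hscale (a * c) A"
  by (simp add: hscale_def vec_eq_iff mult.assoc)

lemma hscale_one: "hscale 1 A = A"
  by (simp add: hscale_def vec_eq_iff)

lemma hscale_nth: "hscale c A $ i $ j = c * A $ i $ j"
  by (simp add: hscale_def)

lemma det_hscale: "det (hscale c (A::'a::field^2^2)) = c\<^sup>2 * det A"
  by (simp add: det_2 hscale_nth power2_eq_square algebra_simps)

context setting begin

definition modP :: "'a^2^2 \<Rightarrow> int \<Rightarrow> 'a^2^2 \<Rightarrow> bool" where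
  "modP P m G' \<longleftrightarrow> Gram b P = hscale (pi powi m) G' \<and> intm G' \<and> det G' \<noteq> 0 \<and> v (det G') = 0"

lemma pip_cancel: "pi powi m * pi powi (- m) = 1"
  using pip_add[of m "-m"] by simp

lemma hscale_cancel: "hscale (pi powi m) (hscale (pi powi (-m)) A) = A"
  by (simp add: hscale_hscale pip_cancel hscale_one)

lemma caseA:
  assumes dP: "det (Gram b P) \<noteq> 0"
    and x: "Gram b P $ 1 $ 2 \<noteq> 0"
    and a: "Gram b P $ 1 $ 1 = 0 \<or> v (Gram b P $ 1 $ 2) < v (Gram b P $ 1 $ 1)"
    and y: "Gram b P $ 2 $ 2 = 0 \<or> v (Gram b P $ 1 $ 2) < v (Gram b P $ 2 $ 2)"
  shows "\<exists>m G'. modP P m G'"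
proof -
  define G where "G = Gram b P"
  define m where "m = v (G $ 1 $ 2)"
  define G' where "G' = hscale (pi powi (-m)) G"
  have e11: "G$1$1 \<in> vball v (m+1)" using a unfolding G_def m_def vb_iff by auto
  have e22: "G$2$2 \<in> vball v (m+1)" using y unfolding G_def m_def vb_iff by auto
  have e12: "G$1$2 \<in> vball v m" unfolding m_def by (rule vb_self)
  have e21: "G$2$1 = G$1$2" unfolding G_def by (rule Gram_21)
  have ent: "G$i$j \<in> vball v m" for i j
    using exhaust_2[of i] exhaust_2[of j] e11 e22 e12 e21 vb_mono[of _ "m+1" m] by auto
  have iG': "intm G'"
    unfolding intm_def G'_def hscale_nth O_vb using vb_pip_mult[OF ent, of "-m"] by simp
  have x2: "(G$1$2)\<^sup>2 \<noteq> 0" "v ((G$1$2)\<^sup>2) = 2 * m" using x vpow[of "G$1$2" 2] by (auto simp: m_def G_def)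
  have ay: "G$1$1 * G$2$2 \<in> vball v (2*m+1)"
    using vb_mult[OF e11 vb_mono[OF e22, of m]] by (simp add: algebra_simps)
  have dG: "det G = - ((G$1$2)\<^sup>2) + G$1$1 * G$2$2" by (simp add: det_2 e21 power2_eq_square)
  have vdG: "v (det G) = 2 * m"
  proof (cases "G$1$1 * G$2$2 = 0")
    case True
    then have "det G = - ((G$1$2)\<^sup>2)" using dG by simp
    then show ?thesis using x2 by (simp only: vneg)
  next
    case False
    then have "v (- ((G$1$2)\<^sup>2)) < v (G$1$1 * G$2$2)" using ay x2 by (simp add: vb_iff vneg)
    then show ?thesis using vstrict[of "- ((G$1$2)\<^sup>2)" "G$1$1 * G$2$2"] x2 False dG by (simp add: vneg)
  qed
  have dG': "det G' = (pi powi (-m))\<^sup>2 * det G" unfolding G'_def by (rule det_hscale)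
  have nz: "det G' \<noteq> 0" using dG' dP pip_nz by (simp add: G_def)
  have "v (det G') = 0"
    using dG' vmult[of "(pi powi (-m))\<^sup>2" "det G"] dP pip_nz vpow[of "pi powi (-m)" 2] vpip vdG
    by (simp add: G_def)
  moreover have "Gram b P = hscale (pi powi m) G'" unfolding G'_def G_def by (simp add: hscale_cancel)
  ultimately show ?thesis using iG' nz unfolding modP_def by blast
qed

end

context setting begin

lemma caseB:
  assumes dP: "det P \<noteq> 0"
    and gP: "\<forall>\<sigma>\<in>Ord. intm (inv2 P ** \<sigma> ** P)"
    and dgO: "\<forall>\<sigma>\<in>Ord. dg \<sigma> \<in> Ord"
    and a: "Gram b P $ 1 $ 1 \<noteq> 0"
    and e12: "Gram b P $ 1 $ 2 \<in> vball v (v (Gram b P $ 1 $ 1))"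
    and e22: "Gram b P $ 2 $ 2 \<in> vball v (v (Gram b P $ 1 $ 1))"
    and ev: "even (v (det (Gram b P)))"
    and dG: "det (Gram b P) \<noteq> 0"
  shows "\<exists>P' m G'. det P' \<noteq> 0 \<and> (\<forall>\<sigma>\<in>Ord. intm (inv2 P' ** \<sigma> ** P')) \<and> modP P' m G'"
proof -
  define G where "G = Gram b P"
  define a where "a = G $ 1 $ 1"
  define m where "m = v a"
  define t where "t = - (G$1$2 / a)"
  have anz: "a \<noteq> 0" using assms by (simp add: a_def G_def)
  have tO: "t \<in> Ov" unfolding t_def O_vb
    using vb_neg[OF vb_div[OF e12 anz]] by (simp add: a_def G_def)
  define Q where "Q = shearQ t"
  have iQ: "intm Q" "intm (inv2 Q)" "det Q \<noteq> 0"
    using tO by (simp_all add: Q_def intm2 inv2_nth det_shearQ Oneg)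
  define P1 where "P1 = P ** Q"
  have dP1: "det P1 \<noteq> 0" using dP iQ by (simp add: P1_def det_mul)
  have gP1: "\<forall>\<sigma>\<in>Ord. intm (inv2 P1 ** \<sigma> ** P1)"
    using good_mult[OF dP iQ(3) iQ(1) iQ(2)] gP by (simp add: P1_def)
  define G1 where "G1 = Gram b P1"
  define \<beta> where "\<beta> = G$2$2 - (G$1$2)\<^sup>2 / a"
  have G21: "G$2$1 = G$1$2" unfolding G_def by (rule Gram_21)
  have G1e: "G1$1$1 = a" "G1$1$2 = 0" "G1$2$1 = 0" "G1$2$2 = \<beta>"
    unfolding G1_def P1_def Gram_mult G_def[symmetric] using anz G21
    by (simp_all add: Q_def m2simps0 t_def a_def \<beta>_def field_simps power2_eq_square)
  have "det G1 = det G" unfolding G1_def P1_def Gram_mult G_def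
    by (simp add: det_mul det_transpose Q_def det_shearQ)
  then have dG1: "a * \<beta> = det G" using G1e by (simp add: det_2)
  have bnz: "\<beta> \<noteq> 0" using dG1 dG by (auto simp: G_def)
  have "(G$1$2)\<^sup>2 / a \<in> vball v m"
    using vb_div[OF vb_mult[OF e12 e12] anz] by (simp add: m_def a_def G_def power2_eq_square)
  then have "\<beta> \<in> vball v m" unfolding \<beta>_def using vb_sub e22 by (simp add: m_def a_def G_def)
  then have mb: "m \<le> v \<beta>" using bnz by (simp add: vb_iff)
  define d where "d = v \<beta> - m"
  have "v (det G) = m + v \<beta>" using dG1 vmult anz bnz by (simp add: m_def flip: dG1)
  then have "even d" using ev by (simp add: d_def G_def)
  then obtain k where dk: "d = 2 * k" by (auto elim: evenE)
  have k0: "k \<ge> 0" using dk mb d_def by simp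
  define D where "D = diagD (pi powi (-k))"
  have dD: "det D \<noteq> 0" using pip_nz by (simp add: D_def det_diagD)
  define P' where "P' = P1 ** D"
  have dP': "det P' \<noteq> 0" using dP1 dD by (simp add: P'_def det_mul)
  have GP': "Gram b P' = transpose D ** G1 ** D" unfolding P'_def G1_def by (rule Gram_mult)
  define G' where "G' = hscale (pi powi (-m)) (Gram b P')"
  have G'e: "G'$1$1 = pi powi (-m) * a" "G'$1$2 = 0" "G'$2$1 = 0"
     "G'$2$2 = pi powi (-m) * (\<beta> * (pi powi (-k) * pi powi (-k)))"
    unfolding G'_def GP' by (simp_all add: hscale_nth D_def m2simps0 G1e)
  have u1: "pi powi (-m) * a \<noteq> 0 \<and> v (pi powi (-m) * a) = 0"
    using anz pip_nz vmult vpip by (simp add: m_def)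
  have u2: "pi powi (-m) * (\<beta> * (pi powi (-k) * pi powi (-k))) \<noteq> 0 \<and>
            v (pi powi (-m) * (\<beta> * (pi powi (-k) * pi powi (-k)))) = 0"
    using bnz pip_nz vmult vpip dk d_def by simp
  have iG': "intm G'" using u1 u2 by (simp add: intm2 G'e Ov_iff)
  have dG': "det G' = (pi powi (-m) * a) * (pi powi (-m) * (\<beta> * (pi powi (-k) * pi powi (-k))))"
    by (simp add: det_2 G'e)
  have vdG': "det G' \<noteq> 0 \<and> v (det G') = 0" using u1 u2 dG' vmult by simp
  have mP': "modP P' m G'" unfolding modP_def using iG' vdG' by (simp add: G'_def hscale_cancel)
  have "intm (inv2 P' ** \<sigma> ** P')" if s: "\<sigma> \<in> Ord" for \<sigma>
  proof -
    define C where "C = inv2 P1 ** \<sigma> ** P1"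
    define C' where "C' = inv2 P1 ** dg \<sigma> ** P1"
    have iC: "intm C" using gP1 s by (simp add: C_def)
    have iC': "intm C'" using gP1 s dgO by (simp add: C'_def)
    have adj: "G1 ** C = transpose C' ** G1" unfolding G1_def C_def C'_def by (rule Gram_adj[OF dP1])
    have "(G1 ** C) $ 1 $ 2 = (transpose C' ** G1) $ 1 $ 2" using adj by simp
    then have rel: "a * C$1$2 = C'$2$1 * \<beta>" by (simp add: m2simps0 G1e)
    have c12: "C$1$2 \<in> vball v d"
    proof -
      have c0: "C'$2$1 \<in> vball v 0" using iC' by (simp add: intm_def O_vb)
      have "C'$2$1 * \<beta> / a \<in> vball v (0 + v \<beta> - v a)"
        using vb_div[OF vb_mult[OF c0 vb_self[of \<beta>]] anz] by simp
      moreover have "C$1$2 = C'$2$1 * \<beta> / a" using rel anz by (simp add: field_simps)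
      ultimately show ?thesis by (simp add: d_def m_def)
    qed
    have eq: "inv2 P' ** \<sigma> ** P' = inv2 D ** C ** D"
      using dP1 dD by (simp add: P'_def C_def inv2_mult matrix_mul_assoc)
    have "(inv2 D ** C ** D) $ 1 $ 2 = C$1$2 * pi powi (-k)"
      using pi(1) by (simp add: D_def m2simps0 det_diagD)
    moreover have "C$1$2 * pi powi (-k) \<in> Ov"
      using vb_mult[OF c12 vb_pip[of "-k"]] vb_mono[of _ "d + - k" 0] dk k0 by (simp add: O_vb)
    moreover have "(inv2 D ** C ** D) $ 1 $ 1 = C$1$1"
      using pi(1) by (simp add: D_def m2simps0 det_diagD)
    moreover have "(inv2 D ** C ** D) $ 2 $ 2 = C$2$2"
      using pi(1) by (simp add: D_def m2simps0 det_diagD)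
    moreover have "(inv2 D ** C ** D) $ 2 $ 1 = C$2$1 / pi powi (-k)"
      using pi(1) by (simp add: D_def m2simps0 det_diagD)
    moreover have "C$2$1 / pi powi (-k) \<in> Ov"
    proof -
      have "C$2$1 / pi powi (-k) = C$2$1 * pi powi k"
        by (simp add: power_int_minus divide_inverse)
      then show ?thesis using iC Omult Opip[OF k0] by (simp add: intm2)
    qed
    ultimately show ?thesis using iC eq by (simp add: intm2)
  qed
  then show ?thesis using dP' mP' by blast
qed

end

context setting begin

lemma jordan:
  assumes dP: "det P \<noteq> 0"
    and gP: "\<forall>\<sigma>\<in>Ord. intm (inv2 P ** \<sigma> ** P)"
    and dgO: "\<forall>\<sigma>\<in>Ord. dg \<sigma> \<in> Ord"
    and ev: "even (v (det (Bs b)))"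
  shows "\<exists>P' m G'. det P' \<noteq> 0 \<and> (\<forall>\<sigma>\<in>Ord. intm (inv2 P' ** \<sigma> ** P')) \<and> modP P' m G'"
proof -
  define G where "G = Gram b P"
  have dG: "det G \<noteq> 0" using dP det_Bs by (simp add: G_def det_Gram)
  have evG: "even (v (det G))"
    using ev dP det_Bs vmult[of "(det P)\<^sup>2" "det (Bs b)"] vpow[of "det P" 2] by (simp add: G_def det_Gram)
  have G21: "G$2$1 = G$1$2" unfolding G_def by (rule Gram_21)
  show ?thesis
  proof (cases "G$1$1 \<noteq> 0 \<and> G$1$2 \<in> vball v (v (G$1$1)) \<and> G$2$2 \<in> vball v (v (G$1$1))")
    case True
    then show ?thesis using caseB[OF dP gP dgO] dG evG by (simp add: G_def)
  next
    case nB: False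
    show ?thesis
    proof (cases "G$2$2 \<noteq> 0 \<and> G$1$2 \<in> vball v (v (G$2$2)) \<and> G$1$1 \<in> vball v (v (G$2$2))")
      case True
      define P2 where "P2 = P ** swapS"
      have iS: "intm swapS" "intm (inv2 swapS)" "det (swapS::'a^2^2) \<noteq> 0"
        by (simp_all add: intm2 inv2_nth det_swapS Oneg)
      have dP2: "det P2 \<noteq> 0" using dP by (simp add: P2_def det_mul det_swapS)
      have gP2: "\<forall>\<sigma>\<in>Ord. intm (inv2 P2 ** \<sigma> ** P2)"
        using good_mult[OF dP iS(3) iS(1) iS(2)] gP by (simp add: P2_def)
      have G2e: "Gram b P2 $ 1 $ 1 = G$2$2" "Gram b P2 $ 1 $ 2 = G$1$2" "Gram b P2 $ 2 $ 2 = G$1$1"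
        unfolding P2_def Gram_mult G_def[symmetric] using G21 by (simp_all add: m2simps0)
      have dG2: "det (Gram b P2) = det G"
        by (simp add: det_Gram G_def P2_def det_mul det_swapS power2_eq_square)
      show ?thesis using caseB[OF dP2 gP2 dgO] True G2e dG2 dG evG by simp
    next
      case nB': False
      have x: "G$1$2 \<noteq> 0"
      proof
        assume z: "G$1$2 = 0"
        then have "G$1$1 \<noteq> 0" "G$2$2 \<noteq> 0" using dG G21 by (auto simp: det_2)
        then show False using nB nB' z by (auto simp: vb_iff)
      qed
      have "G$1$1 = 0 \<or> v (G$1$2) < v (G$1$1)" "G$2$2 = 0 \<or> v (G$1$2) < v (G$2$2)"
        using nB nB' x by (auto simp: vb_iff)
      then obtain m G' where "modP P m G'" using caseA[of P] dG x by (auto simp: G_def)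
      then show ?thesis using dP gP by blast
    qed
  qed
qed

end


lemma span_subset:
  assumes "0 \<in> X" "\<And>x y. x \<in> X \<Longrightarrow> y \<in> X \<Longrightarrow> x + y \<in> X"
    "\<And>r x. r \<in> R \<Longrightarrow> x \<in> X \<Longrightarrow> sc r x \<in> X" "S \<subseteq> X"
  shows "span_with R sc S \<subseteq> X"
proof
  fix y assume "y \<in> span_with R sc S"
  then obtain T c where T: "finite T" "T \<subseteq> S" "\<forall>x\<in>T. c x \<in> R" "y = (\<Sum>x\<in>T. sc (c x) x)"
    by (rule span_withE)
  have "(\<Sum>x\<in>T. sc (c x) x) \<in> X" using T(1,2,3)
  proof (induction T rule: finite_induct)
    case empty then show ?case using assms(1) by simp
  next
    case (insert x F)
    then show ?case using assms(2,3,4) by auto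
  qed
  then show "y \<in> X" using T(4) by simp
qed

lemma span_add:
  assumes scadd: "\<And>a c x. sc (a + c) x = sc a x + sc c x" and sc0: "\<And>x. sc 0 x = 0"
    and R0: "0 \<in> R" and Radd: "\<And>a c. a \<in> R \<Longrightarrow> c \<in> R \<Longrightarrow> a + c \<in> R"
    and y1: "y1 \<in> span_with R sc S" and y2: "y2 \<in> span_with R sc S"
  shows "y1 + y2 \<in> span_with R sc S"
proof -
  obtain T1 c1 where T1: "finite T1" "T1 \<subseteq> S" "\<forall>x\<in>T1. c1 x \<in> R" "y1 = (\<Sum>x\<in>T1. sc (c1 x) x)"
    using y1 by (rule span_withE)
  obtain T2 c2 where T2: "finite T2" "T2 \<subseteq> S" "\<forall>x\<in>T2. c2 x \<in> R" "y2 = (\<Sum>x\<in>T2. sc (c2 x) x)"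
    using y2 by (rule span_withE)
  define d1 where "d1 x = (if x \<in> T1 then c1 x else 0)" for x
  define d2 where "d2 x = (if x \<in> T2 then c2 x else 0)" for x
  define T where "T = T1 \<union> T2"
  have fT: "finite T" using T1 T2 by (simp add: T_def)
  have s1: "(\<Sum>x\<in>T. sc (d1 x) x) = y1"
  proof -
    have "(\<Sum>x\<in>T. sc (d1 x) x) = (\<Sum>x\<in>T1. sc (d1 x) x)"
      by (rule sum.mono_neutral_right) (use fT in \<open>auto simp: T_def d1_def sc0\<close>)
    then show ?thesis using T1 by (simp add: d1_def)
  qed
  have s2: "(\<Sum>x\<in>T. sc (d2 x) x) = y2"
  proof -
    have "(\<Sum>x\<in>T. sc (d2 x) x) = (\<Sum>x\<in>T2. sc (d2 x) x)"
      by (rule sum.mono_neutral_right) (use fT in \<open>auto simp: T_def d2_def sc0\<close>)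
    then show ?thesis using T2 by (simp add: d2_def)
  qed
  have f1: "y1 + y2 = (\<Sum>x\<in>T. sc (d1 x + d2 x) x)"
    using s1 s2 by (simp add: scadd sum.distrib)
  have f2: "\<forall>x\<in>T. d1 x + d2 x \<in> R" using T1 T2 R0 Radd by (auto simp: d1_def d2_def)
  have f3: "T \<subseteq> S" using T1 T2 by (auto simp: T_def)
  show ?thesis unfolding span_with_def mem_Collect_eq
    by (rule exI[of _ T], rule exI[of _ "\<lambda>x. d1 x + d2 x"]) (use fT f1 f2 f3 in simp)
qed

lemma hscale_add: "hscale (a + c) x = hscale a x + hscale c (x::'a::comm_ring_1^2^2)"
  by (simp add: hscale_def vec_eq_iff distrib_right)
lemma hscale_0: "hscale 0 (x::'a::comm_ring_1^2^2) = 0"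
  by (simp add: hscale_def vec_eq_iff)

lemma smult_add: "(a + c) *s x = a *s x + c *s (x::'a::comm_ring_1^'n)"
  by (simp add: vec_eq_iff distrib_right)

context dval begin

lemma span_add_O_hs: "y1 \<in> span_with Ov hscale S \<Longrightarrow> y2 \<in> span_with Ov hscale S \<Longrightarrow> y1 + y2 \<in> span_with Ov hscale S"
  by (rule span_add[OF hscale_add hscale_0]) (auto intro: Oadd)

lemma span_add_U_hs: "y1 \<in> span_with UNIV hscale (S::('a^2^2) set) \<Longrightarrow> y2 \<in> span_with UNIV hscale S \<Longrightarrow> y1 + y2 \<in> span_with UNIV hscale S"
  by (rule span_add[OF hscale_add hscale_0]) auto

lemma span_add_O_v: "y1 \<in> span_with Ov (*s) S \<Longrightarrow> y2 \<in> span_with Ov (*s) S \<Longrightarrow> y1 + y2 \<in> span_with Ov (*s) S"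
  by (rule span_add[of "(*s)"]) (auto intro: Oadd simp: smult_add)

lemma span_add_U_v: "y1 \<in> span_with UNIV (*s) (S::('a^2) set) \<Longrightarrow> y2 \<in> span_with UNIV (*s) S \<Longrightarrow> y1 + y2 \<in> span_with UNIV (*s) S"
  by (rule span_add[of "(*s)"]) (auto simp: smult_add)

end

lemma matrix_add_rdistrib: "((B + C) ** A) = (B ** A) + (C ** (A::'a::semiring_1^'n^'n))"
  by (simp add: vec_eq_iff matrix_matrix_mult_def distrib_right sum.distrib)

definition eij :: "2 \<Rightarrow> 2 \<Rightarrow> 'a::field^2^2" where
  "eij i j = (\<chi> r s. if r = i \<and> s = j then 1 else 0)"

definition Em :: "'a::field^2^2 \<Rightarrow> 2 \<Rightarrow> 2 \<Rightarrow> 'a^2^2" where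
  "Em P i j = P ** eij i j ** inv2 P"

lemma eij_nth[simp]: "eij i j $ r $ s = (if r = i \<and> s = j then 1 else 0)"
  by (simp add: eij_def)

lemma C_decomp: "(C::'a::field^2^2) = hscale (C$1$1) (eij 1 1) + hscale (C$1$2) (eij 1 2) + hscale (C$2$1) (eij 2 1) + hscale (C$2$2) (eij 2 2)"
  by (simp add: vec_eq_iff forall_2 hscale_def)

lemma mm_hscale_l: "A ** hscale c B = hscale c (A ** (B::'a::comm_ring_1^2^2))"
  by (simp add: vec_eq_iff hscale_def matrix_matrix_mult_def sum_distrib_left ac_simps)
lemma mm_hscale_r: "hscale c B ** A = hscale c (B ** (A::'a::comm_ring_1^2^2))"
  by (simp add: vec_eq_iff hscale_def matrix_matrix_mult_def sum_distrib_left ac_simps)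

lemma conj_decomp: "P ** C ** Q = hscale (C$1$1) (P ** eij 1 1 ** Q) + hscale (C$1$2) (P ** eij 1 2 ** Q)
   + hscale (C$2$1) (P ** eij 2 1 ** Q) + hscale (C$2$2) (P ** eij 2 2 ** (Q::'a::field^2^2))"
  apply (subst C_decomp[of C])
  by (simp add: matrix_add_ldistrib matrix_add_rdistrib mm_hscale_l mm_hscale_r)

lemma conj_back: "det P \<noteq> 0 \<Longrightarrow> P ** (inv2 P ** \<sigma> ** P) ** inv2 P = \<sigma>"
  by (simp add: matrix_mul_assoc inv2_right) (simp add: inv2_right flip: matrix_mul_assoc)

lemma inv2_Em: "det P \<noteq> 0 \<Longrightarrow> inv2 P ** Em P i j ** P = eij i j"
  unfolding Em_def by (simp add: matrix_mul_assoc inv2_left) (simp add: inv2_left flip: matrix_mul_assoc)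

context setting begin

lemma intm_eij: "intm (eij i j)" by (simp add: intm_def)

lemma intm_add: "intm A \<Longrightarrow> intm B \<Longrightarrow> intm (A + B)" by (simp add: intm_def Oadd)
lemma intm_hscale: "c \<in> Ov \<Longrightarrow> intm A \<Longrightarrow> intm (hscale c A)" by (simp add: intm_def hscale_nth Omult)
lemma intm_transpose: "intm A \<Longrightarrow> intm (transpose A)" by (simp add: intm_def transpose_def)

lemma End_order:
  assumes dP: "det P \<noteq> 0"
  shows "is_order v (End_lat (latP P))"
proof -
  let ?E = "End_lat (latP P)"
  have E: "?E = {\<sigma>. intm (inv2 P ** \<sigma> ** P)}" using End_latP[OF dP] .
  define S where "S = (\<lambda>(i, j). Em P i j) ` UNIV"
  have fS: "finite S" by (simp add: S_def)
  have SE: "S \<subseteq> ?E" using inv2_Em[OF dP] intm_eij by (auto simp: S_def E)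
  have addE: "A + B \<in> ?E" if "A \<in> ?E" "B \<in> ?E" for A B
    using that by (simp add: E matrix_add_ldistrib matrix_add_rdistrib intm_add)
  have scE: "hscale c A \<in> ?E" if "c \<in> Ov" "A \<in> ?E" for c A
    using that by (simp add: E mm_hscale_l mm_hscale_r intm_hscale)
  have zE: "0 \<in> ?E" by (simp add: E intm_def)
  have dec: "\<sigma> = hscale (C$1$1) (Em P 1 1) + hscale (C$1$2) (Em P 1 2) + hscale (C$2$1) (Em P 2 1) + hscale (C$2$2) (Em P 2 2)"
    if "C = inv2 P ** \<sigma> ** P" for \<sigma> C
    using conj_decomp[of P C "inv2 P"] conj_back[OF dP, of \<sigma>] that by (simp add: Em_def)
  have EmS: "Em P i j \<in> S" for i j by (auto simp: S_def)
  have "?E = span_with Ov hscale S"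
  proof
    show "?E \<subseteq> span_with Ov hscale S"
    proof
      fix \<sigma> assume s: "\<sigma> \<in> ?E"
      define C where "C = inv2 P ** \<sigma> ** P"
      have iC: "intm C" using s by (simp add: E C_def)
      have t: "hscale (C$i$j) (Em P i j) \<in> span_with Ov hscale S" for i j
        using span_mem[OF EmS, of "C$i$j" Ov hscale] iC by (simp add: intm_def)
      show "\<sigma> \<in> span_with Ov hscale S"
        using dec[OF C_def] t by (metis span_add_O_hs)
    qed
    show "span_with Ov hscale S \<subseteq> ?E" by (rule span_subset[OF zE addE scE SE])
  qed
  moreover have "span_with UNIV hscale ?E = UNIV"
  proof -
    have "\<tau> \<in> span_with UNIV hscale ?E" for \<tau>
    proof -
      define C where "C = inv2 P ** \<tau> ** P"
      have t: "hscale (C$i$j) (Em P i j) \<in> span_with UNIV hscale ?E" for i j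
        using span_mem[of "Em P i j" ?E "C$i$j" UNIV hscale] SE EmS by blast
      show ?thesis using dec[OF C_def] t by (metis span_add_U_hs)
    qed
    then show ?thesis by blast
  qed
  moreover have "mat 1 \<in> ?E" using dP by (simp add: E inv2_left intm_1)
  moreover have "A ** B \<in> ?E" if "A \<in> ?E" "B \<in> ?E" for A B
  proof -
    have "inv2 P ** (A ** B) ** P = (inv2 P ** A ** P) ** (inv2 P ** B ** P)"
      using dP by (simp add: matrix_mul_assoc inv2_right) (simp add: inv2_right flip: matrix_mul_assoc)
    then show ?thesis using that by (simp add: E intm_mult)
  qed
  ultimately show ?thesis unfolding is_order_def o_lattice_def using fS by blast
qed

end

lemma hscale_inj: "c \<noteq> 0 \<Longrightarrow> hscale c A = hscale c B \<Longrightarrow> A = (B::'a::field^2^2)"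
  by (simp add: vec_eq_iff hscale_def)

context setting begin

lemma intm_inv2_unit: "intm G' \<Longrightarrow> det G' \<noteq> 0 \<Longrightarrow> v (det G') = 0 \<Longrightarrow> intm (inv2 G')"
proof -
  assume iG: "intm G'" and d: "det G' \<noteq> 0" "v (det G') = 0"
  have u: "inverse (det G') \<in> Ov" using Ounit_inv d by simp
  have "x / det G' \<in> Ov" if "x \<in> Ov" for x using Omult[OF that u] by (simp add: divide_inverse)
  then show ?thesis using iG by (simp add: intm2 inv2_nth Oneg)
qed

lemma End_dg:
  assumes dP: "det P \<noteq> 0" and mP: "modP P m G'"
    and s: "\<sigma> \<in> End_lat (latP P)"
  shows "dg \<sigma> \<in> End_lat (latP P)"
proof -
  have E: "End_lat (latP P) = {\<sigma>. intm (inv2 P ** \<sigma> ** P)}" using End_latP[OF dP] .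
  define C where "C = inv2 P ** \<sigma> ** P"
  define C' where "C' = inv2 P ** dg \<sigma> ** P"
  have iC: "intm C" using s E C_def by simp
  have GP: "Gram b P = hscale (pi powi m) G'" "intm G'" "det G' \<noteq> 0" "v (det G') = 0"
    using mP by (auto simp: modP_def)
  have "Gram b P ** C = transpose C' ** Gram b P" unfolding C_def C'_def by (rule Gram_adj[OF dP])
  then have "hscale (pi powi m) (G' ** C) = hscale (pi powi m) (transpose C' ** G')"
    by (simp add: GP(1) mm_hscale_l mm_hscale_r)
  then have eq: "G' ** C = transpose C' ** G'" using hscale_inj pip_nz by blast
  have "transpose C' = G' ** C ** inv2 G'"
    using eq GP(3) by (simp add: matrix_mul_assoc[symmetric] inv2_right)
  then have "intm (transpose C')" using iC GP intm_inv2_unit by (simp add: intm_mult)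
  then have "intm C'" using intm_transpose[of "transpose C'"] by simp
  then show ?thesis using E C'_def by simp
qed

lemma End_inv_order:
  assumes dP: "det P \<noteq> 0" and mP: "modP P m G'"
  shows "inv_order v dg (End_lat (latP P))"
proof -
  have "dg ` End_lat (latP P) = End_lat (latP P)"
  proof
    show "dg ` End_lat (latP P) \<subseteq> End_lat (latP P)" using End_dg[OF dP mP] by blast
    show "End_lat (latP P) \<subseteq> dg ` End_lat (latP P)"
    proof
      fix \<sigma> assume "\<sigma> \<in> End_lat (latP P)"
      then have "dg \<sigma> \<in> End_lat (latP P)" using End_dg[OF dP mP] by blast
      then show "\<sigma> \<in> dg ` End_lat (latP P)" using dg_dg[of \<sigma>] by (metis image_eqI)
    qed
  qed
  then show ?thesis using End_order[OF dP] by (simp add: inv_order_def)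
qed

end

context setting begin

lemma latP_add: "x \<in> latP P \<Longrightarrow> y \<in> latP P \<Longrightarrow> x + y \<in> latP P"
proof -
  assume "x \<in> latP P" "y \<in> latP P"
  then obtain x' y' where "intv x'" "x = P *v x'" "intv y'" "y = P *v y'" unfolding latP_def by blast
  then have "intv (x' + y')" "x + y = P *v (x' + y')" by (simp_all add: intv_add matrix_vector_right_distrib)
  then show ?thesis unfolding latP_def by blast
qed

lemma latP_sc: "c \<in> Ov \<Longrightarrow> x \<in> latP P \<Longrightarrow> c *s x \<in> latP P"
  unfolding latP_def by (auto simp: mv_smult[symmetric] intro: intv_scale)

lemma latP_0: "0 \<in> latP P"
  unfolding latP_def by (rule CollectI, rule exI[of _ 0]) (simp add: intv_def)

lemma latP_ax: "P *v axis j 1 \<in> latP P"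
  unfolding latP_def using intv_axis by blast

lemma Pv_decomp: "(P::'a^2^2) *v x = x$1 *s (P *v axis 1 1) + x$2 *s (P *v axis 2 1)"
  by (simp add: vec_eq_iff forall_2 matrix_vector_mult_def sum_2 axis_def)

lemma latP_olattice:
  assumes dP: "det P \<noteq> 0"
  shows "o_lattice v (*s) (latP P)"
proof -
  define S where "S = {P *v axis 1 1, P *v axis 2 1}"
  have "latP P = span_with Ov (*s) S"
  proof
    show "latP P \<subseteq> span_with Ov (*s) S"
    proof
      fix y assume "y \<in> latP P"
      then obtain x where x: "intv x" "y = P *v x" unfolding latP_def by blast
      have t: "x$j *s (P *v axis j 1) \<in> span_with Ov (*s) S" for j
        using span_mem[of "P *v axis j 1" S "x$j" Ov "(*s)"] x(1) exhaust_2[of j]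
        by (auto simp: S_def intv_def)
      show "y \<in> span_with Ov (*s) S" using x(2) Pv_decomp[of P x] t span_add_O_v by metis
    qed
    show "span_with Ov (*s) S \<subseteq> latP P"
      by (rule span_subset) (auto simp: S_def latP_0 latP_add latP_sc latP_ax)
  qed
  moreover have "span_with UNIV (*s) (latP P) = UNIV"
  proof -
    have "y \<in> span_with UNIV (*s) (latP P)" for y
    proof -
      define x where "x = inv2 P *v y"
      have y: "y = P *v x" using dP by (simp add: x_def mv_inv2)
      have t: "x$j *s (P *v axis j 1) \<in> span_with UNIV (*s) (latP P)" for j
        using span_mem[of "P *v axis j 1" "latP P" "x$j" UNIV "(*s)"] latP_ax by blast
      show ?thesis using y Pv_decomp[of P x] t span_add_U_v by metis
    qed
    then show ?thesis by blast
  qed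
  moreover have "finite S" by (simp add: S_def)
  ultimately show ?thesis unfolding o_lattice_def by (intro conjI exI[of _ S]) simp_all
qed

lemma bil_int: "intm M \<Longrightarrow> intv x \<Longrightarrow> intv y \<Longrightarrow> bil M x y \<in> Ov"
  by (simp add: bil_def intm2 intv2 Oadd Omult)

lemma bil_ax: "bil M z (axis 1 1) = (transpose M *v z)$1" "bil M z (axis 2 1) = (transpose M *v z)$2"
  by (simp_all add: bil_def axis_def matrix_vector_mult_def sum_2 transpose_def ac_simps)

lemma bil_hscale: "bil (hscale c M) x y = bil M (c *s x) y"
  by (simp add: bil_def hscale_nth ring_distribs ac_simps)

lemma dual_latP:
  assumes dP: "det P \<noteq> 0" and mP: "modP P m G'"
  shows "dual_lattice v b (latP P) = {y. pi powi m *s y \<in> latP P}"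
proof -
  have GP: "Gram b P = hscale (pi powi m) G'" "intm G'" "det G' \<noteq> 0" "v (det G') = 0"
    using mP by (auto simp: modP_def)
  have key: "y \<in> dual_lattice v b (latP P) \<longleftrightarrow> intv (pi powi m *s (inv2 P *v y))" for y
  proof -
    define z where "z = inv2 P *v y"
    have yz: "y = P *v z" using dP by (simp add: z_def mv_inv2)
    have bb: "b y (P *v x) = bil G' (pi powi m *s z) x" for x
      using b_Gram[of P z x] by (simp add: yz GP(1) bil_hscale)
    have "y \<in> dual_lattice v b (latP P) \<longleftrightarrow> (\<forall>x. intv x \<longrightarrow> bil G' (pi powi m *s z) x \<in> Ov)"
      unfolding dual_lattice_def latP_def using bb by auto
    also have "\<dots> \<longleftrightarrow> intv (pi powi m *s z)"
    proof
      assume h: "\<forall>x. intv x \<longrightarrow> bil G' (pi powi m *s z) x \<in> Ov"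
      define w where "w = transpose G' *v (pi powi m *s z)"
      have iw: "intv w" using h[rule_format, OF intv_axis[of 1]] h[rule_format, OF intv_axis[of 2]]
        by (simp add: bil_ax w_def intv2)
      have tt: "transpose (inv2 G') ** transpose G' = mat 1"
        using GP(3) inv2_right[of G'] by (metis matrix_transpose_mul transpose_mat)
      have "transpose (inv2 G') *v w = (transpose (inv2 G') ** transpose G') *v (pi powi m *s z)"
        by (simp only: w_def matrix_vector_mul_assoc)
      then have "pi powi m *s z = transpose (inv2 G') *v w"
        by (simp only: tt matrix_vector_mul_lid)
      then show "intv (pi powi m *s z)"
        using intm_mv[OF intm_transpose[OF intm_inv2_unit[OF GP(2,3,4)]] iw] by simp
    next
      assume "intv (pi powi m *s z)"
      then show "\<forall>x. intv x \<longrightarrow> bil G' (pi powi m *s z) x \<in> Ov" using bil_int GP(2) by blast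
    qed
    finally show ?thesis by (simp add: z_def)
  qed
  show ?thesis
  proof (intro set_eqI iffI)
    fix y assume "y \<in> dual_lattice v b (latP P)"
    then have "intv (pi powi m *s (inv2 P *v y))" using key by blast
    moreover have "pi powi m *s y = P *v (pi powi m *s (inv2 P *v y))" using dP by (simp add: mv_smult mv_inv2)
    ultimately show "y \<in> {y. pi powi m *s y \<in> latP P}" unfolding latP_def by blast
  next
    fix y assume "y \<in> {y. pi powi m *s y \<in> latP P}"
    then obtain x where x: "intv x" "pi powi m *s y = P *v x" unfolding latP_def by blast
    have "pi powi m *s (inv2 P *v y) = x" using x dP by (metis inv2_mv mv_smult)
    then show "y \<in> dual_lattice v b (latP P)" using key x by simp
  qed
qed

lemma End_scaled:
  assumes c: "c \<noteq> 0"
  shows "End_lat {y. c *s y \<in> L} = End_lat (L::('a^2) set)"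
proof (intro set_eqI iffI)
  fix \<sigma> assume s: "\<sigma> \<in> End_lat {y. c *s y \<in> L}"
  show "\<sigma> \<in> End_lat L" unfolding End_lat_def mem_Collect_eq
  proof clarify
    fix x assume x: "x \<in> L"
    have "inverse c *s x \<in> {y. c *s y \<in> L}" using x c by simp
    then have "\<sigma> *v (inverse c *s x) \<in> {y. c *s y \<in> L}" using s unfolding End_lat_def by blast
    then show "\<sigma> *v x \<in> L" using c by (simp add: mv_smult)
  qed
next
  fix \<sigma> assume s: "\<sigma> \<in> End_lat L"
  show "\<sigma> \<in> End_lat {y. c *s y \<in> L}" unfolding End_lat_def mem_Collect_eq
  proof clarify
    fix y assume "c *s y \<in> L"
    then have "\<sigma> *v (c *s y) \<in> L" using s unfolding End_lat_def by blast
    then show "c *s (\<sigma> *v y) \<in> L" by (simp add: mv_smult)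
  qed
qed

definition Iid :: "int \<Rightarrow> 'a set" where "Iid m = {pi powi m * r | r. r \<in> Ov}"

lemma frac_Iid: "frac_ideal v (Iid m)"
proof -
  have "Iid m = span_with Ov (*) {pi powi m}"
  proof
    show "Iid m \<subseteq> span_with Ov (*) {pi powi m}"
      unfolding Iid_def using span_mem[of "pi powi m" "{pi powi m}" _ Ov "(*)"] by (auto simp: mult.commute)
    show "span_with Ov (*) {pi powi m} \<subseteq> Iid m"
      by (rule span_subset) (auto simp: Iid_def intro: exI[of _ 0] exI[of _ 1] Omult Oadd
          simp: ring_distribs[symmetric] mult.left_commute[of _ "pi powi m"])
  qed
  moreover have "span_with UNIV (*) (Iid m) = UNIV"
  proof -
    have "x \<in> span_with UNIV (*) (Iid m)" for x
    proof -
      have "pi powi m \<in> Iid m" unfolding Iid_def by (rule CollectI, rule exI[of _ 1]) simp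
      then have "(x / pi powi m) * pi powi m \<in> span_with UNIV (*) (Iid m)" by (rule span_mem) simp
      then show ?thesis using pi(1) by simp
    qed
    then show ?thesis by blast
  qed
  ultimately show ?thesis unfolding frac_ideal_def o_lattice_def by (intro conjI exI[of _ "{pi powi m}"]) simp_all
qed

lemma modular:
  assumes dP: "det P \<noteq> 0" and mP: "modP P m G'"
  shows "modular_lattice v b (Iid m) (latP P)"
proof -
  define D where "D = {y. pi powi m *s y \<in> latP P}"
  have Dd: "dual_lattice v b (latP P) = D" using dual_latP[OF dP mP] D_def by simp
  have "latP P = span_with Ov (*s) {a *s x | a x. a \<in> Iid m \<and> x \<in> D}"
  proof
    show "latP P \<subseteq> span_with Ov (*s) {a *s x | a x. a \<in> Iid m \<and> x \<in> D}"
    proof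
      fix y assume y: "y \<in> latP P"
      have "pi powi m \<in> Iid m" unfolding Iid_def by (rule CollectI, rule exI[of _ 1]) simp
      moreover have "pi powi (-m) *s y \<in> D" using y pip_cancel by (simp add: D_def)
      moreover have "y = pi powi m *s (pi powi (-m) *s y)" using pip_cancel by simp
      ultimately have "y \<in> {a *s x | a x. a \<in> Iid m \<and> x \<in> D}" by blast
      then have "1 *s y \<in> span_with Ov (*s) {a *s x | a x. a \<in> Iid m \<and> x \<in> D}" by (rule span_mem) simp
      then show "y \<in> span_with Ov (*s) {a *s x | a x. a \<in> Iid m \<and> x \<in> D}" by simp
    qed
    show "span_with Ov (*s) {a *s x | a x. a \<in> Iid m \<and> x \<in> D} \<subseteq> latP P"
    proof (rule span_subset[OF latP_0 latP_add latP_sc])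
      show "{a *s x | a x. a \<in> Iid m \<and> x \<in> D} \<subseteq> latP P"
      proof clarify
        fix a x assume a: "a \<in> Iid m" and x: "x \<in> D"
        obtain r where r: "r \<in> Ov" "a = pi powi m * r" using a unfolding Iid_def by blast
        have "a *s x = r *s (pi powi m *s x)" using r by (simp add: mult.commute)
        moreover have "r *s (pi powi m *s x) \<in> latP P"
        proof -
          have "pi powi m *s x \<in> latP P" using x D_def by simp
          then show ?thesis by (rule latP_sc[OF r(1)])
        qed
        ultimately show "a *s x \<in> latP P" by (simp only:)
      qed
    qed
  qed
  then show ?thesis unfolding modular_lattice_def ideal_times_lattice_def Dd
    using latP_olattice[OF dP] by simp
qed

end


lemma trace_conj: "det P \<noteq> 0 \<Longrightarrow> trace (P ** M ** inv2 P) = trace (M::'a::field^2^2)"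
proof -
  assume d: "det P \<noteq> 0"
  have "trace (P ** M ** inv2 P) = trace (P ** (M ** inv2 P))" by (simp add: matrix_mul_assoc)
  also have "\<dots> = trace ((M ** inv2 P) ** P)" by (rule trace_mul_sym)
  also have "\<dots> = trace M" using d by (simp add: matrix_mul_assoc[symmetric] inv2_left)
  finally show ?thesis .
qed

lemma inv2_cancel_r: "det P \<noteq> 0 \<Longrightarrow> (X ** inv2 P) ** P = (X::'a::field^2^2)"
  by (simp add: matrix_mul_assoc[symmetric] inv2_left)

definition sw34 :: "4 \<Rightarrow> 4" where "sw34 = Transposition.transpose 3 4"

lemma sw34_vals: "sw34 1 = 1" "sw34 2 = 2" "sw34 3 = 4" "sw34 4 = 3"
  by (simp_all add: sw34_def transpose_def)

lemma sw34_perm: "sw34 permutes UNIV" unfolding sw34_def by (rule permutes_swap_id) auto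

lemma sign_sw34: "sign sw34 = -1"
  unfolding sw34_def by (simp add: sign_swap_id)

definition idx1 :: "4 \<Rightarrow> 2" where "idx1 i = (if i = 1 then 1 else if i = 2 then 2 else if i = 3 then 1 else 2)"
definition idx2 :: "4 \<Rightarrow> 2" where "idx2 i = (if i = 1 then 1 else if i = 2 then 2 else if i = 3 then 2 else 1)"

lemma trace_eij: "trace (eij a b ** eij c d :: 'a::field^2^2) = (if b = c \<and> a = d then 1 else 0)"
  using exhaust_2[of a] exhaust_2[of b] exhaust_2[of c] exhaust_2[of d]
  by (elim disjE) (simp_all add: trace_def sum_2 matrix_matrix_mult_def)

lemma trace_matrix_std:
  "(\<chi> (i::4) (j::4). trace (eij (idx1 i) (idx2 i) ** eij (idx1 j) (idx2 j) :: 'a::field^2^2))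
     = (\<chi> i. (mat 1 :: 'a^4^4) $ sw34 i)"
  unfolding trace_eij
  by (simp add: vec_eq_iff forall_4 idx1_def idx2_def sw34_vals mat_def)

lemma det_std: "det (\<chi> (i::4) (j::4). trace (eij (idx1 i) (idx2 i) ** eij (idx1 j) (idx2 j) :: 'a::field^2^2)) = -1"
  unfolding trace_matrix_std det_permute_rows[OF sw34_perm] sign_sw34 by simp

context setting begin

lemma det_int: "(\<And>i j. (M::'a^'n^'n) $ i $ j \<in> Ov) \<Longrightarrow> det M \<in> Ov"
  unfolding det_def by (intro Osum Omult Oint Oprod) auto

lemma disc_full_End:
  assumes dP: "det P \<noteq> 0"
  shows "disc_full v (End_lat (latP P)) = Ov"
proof -
  let ?E = "End_lat (latP P)"
  have E: "?E = {\<sigma>. intm (inv2 P ** \<sigma> ** P)}" using End_latP[OF dP] .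
  have mulE: "A ** B \<in> ?E" if "A \<in> ?E" "B \<in> ?E" for A B
    using End_order[OF dP] that unfolding is_order_def by blast
  have trE: "trace \<sigma> \<in> Ov" if "\<sigma> \<in> ?E" for \<sigma>
  proof -
    have "trace \<sigma> = trace (P ** (inv2 P ** \<sigma> ** P) ** inv2 P)" using conj_back[OF dP] by simp
    also have "\<dots> = trace (inv2 P ** \<sigma> ** P)" by (rule trace_conj[OF dP])
    finally show ?thesis using that E by (simp add: trace_def intm_def Osum)
  qed
  define X where "X = {det (\<chi> (i::4) (j::4). trace (\<alpha> i ** \<alpha> j)) | \<alpha>. \<forall>i. \<alpha> i \<in> ?E}"
  have XO: "X \<subseteq> Ov" unfolding X_def using trE mulE by (auto intro!: det_int)
  have m1: "-1 \<in> X"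
  proof -
    define \<alpha> where "\<alpha> i = Em P (idx1 i) (idx2 i)" for i
    have aE: "\<forall>i. \<alpha> i \<in> ?E" using inv2_Em[OF dP] intm_eij by (simp add: E \<alpha>_def)
    have "trace (\<alpha> i ** \<alpha> j) = trace (eij (idx1 i) (idx2 i) ** eij (idx1 j) (idx2 j))" for i j
    proof -
      have "\<alpha> i ** \<alpha> j = P ** (eij (idx1 i) (idx2 i) ** eij (idx1 j) (idx2 j)) ** inv2 P"
        using dP by (simp add: \<alpha>_def Em_def matrix_mul_assoc inv2_cancel_r)
      then show ?thesis using trace_conj[OF dP] by simp
    qed
    then have "det (\<chi> (i::4) (j::4). trace (\<alpha> i ** \<alpha> j)) = -1" using det_std by simp
    then show ?thesis unfolding X_def using aE by (intro CollectI exI[of _ \<alpha>]) simp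
  qed
  have "span_with Ov (*) X = Ov"
  proof
    show "span_with Ov (*) X \<subseteq> Ov" by (rule span_subset) (use XO in \<open>auto intro: Oadd Omult\<close>)
    show "Ov \<subseteq> span_with Ov (*) X"
    proof
      fix x assume "x \<in> Ov"
      then have "(-x) * (-1) \<in> span_with Ov (*) X" using span_mem[OF m1, of "-x" Ov "(*)"] Oneg by blast
      then show "x \<in> span_with Ov (*) X" by simp
    qed
  qed
  then show ?thesis by (simp add: disc_full_def ideal_gen_def X_def)
qed

end

context setting begin

lemma vball_eq_Iid: "vball v k = Iid k"
proof (intro set_eqI iffI)
  fix x assume x: "x \<in> vball v k"
  have "x / pi powi k \<in> Ov" using vb_div[OF x pip_nz[of k]] vpip by (simp add: O_vb)
  moreover have "x = pi powi k * (x / pi powi k)" using pip_nz[of k] by simp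
  ultimately show "x \<in> Iid k" unfolding Iid_def by blast
next
  fix x assume "x \<in> Iid k"
  then obtain r where "r \<in> Ov" "x = pi powi k * r" unfolding Iid_def by blast
  then show "x \<in> vball v k" using vb_pip_mult[of r 0 k] by (simp add: O_vb)
qed

lemma frac_ideal_vball:
  assumes D: "frac_ideal v D"
  shows "\<exists>k. D = vball v k"
proof -
  obtain S where S: "finite S" "D = span_with Ov (*) S" and sp: "span_with UNIV (*) D = UNIV"
    using D unfolding frac_ideal_def o_lattice_def by blast
  have "S - {0} \<noteq> {}"
  proof
    assume "S - {0} = {}"
    then have "S \<subseteq> {0}" by blast
    then have "D \<subseteq> {0}" unfolding S(2) by (intro span_subset) auto
    then have "span_with UNIV (*) D \<subseteq> {0}" by (intro span_subset) auto
    then show False using sp by (metis UNIV_I insertE one_neq_zero singletonD subsetD)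
  qed
  define k where "k = Min (v ` (S - {0}))"
  have fin: "finite (v ` (S - {0}))" using S(1) by simp
  have "k \<in> v ` (S - {0})" unfolding k_def using Min_in[OF fin] \<open>S - {0} \<noteq> {}\<close> by blast
  then obtain s0 where s0: "s0 \<in> S" "s0 \<noteq> 0" "v s0 = k" by auto
  have Sk: "x \<in> vball v k" if "x \<in> S" for x
  proof (cases "x = 0")
    case False then have "k \<le> v x" unfolding k_def using fin that by simp
    then show ?thesis by (simp add: vb_iff)
  qed (simp add: vb_iff)
  have "D = vball v k"
  proof
    show "D \<subseteq> vball v k" unfolding S(2)
    proof (rule span_subset)
      show "0 \<in> vball v k" by (simp add: vb_iff)
      show "\<And>x y. x \<in> vball v k \<Longrightarrow> y \<in> vball v k \<Longrightarrow> x + y \<in> vball v k" by (rule vb_add)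
      show "\<And>r x. r \<in> Ov \<Longrightarrow> x \<in> vball v k \<Longrightarrow> r * x \<in> vball v k"
        using vb_mult[of _ 0 _ k] by (simp add: O_vb)
      show "S \<subseteq> vball v k" using Sk by blast
    qed
    show "vball v k \<subseteq> D"
    proof
      fix y assume y: "y \<in> vball v k"
      have "y / s0 \<in> Ov" using vb_div[OF y s0(2)] s0(3) by (simp add: O_vb)
      then have "(y / s0) * s0 \<in> D" unfolding S(2) by (rule span_mem[OF s0(1), rotated])
      then show "y \<in> D" using s0(2) by simp
    qed
  qed
  then show ?thesis by blast
qed

lemma ideal_prod_vball: "ideal_prod v (vball v k) (vball v k) = vball v (2 * k)"
proof
  show "ideal_prod v (vball v k) (vball v k) \<subseteq> vball v (2 * k)"
    unfolding ideal_prod_def ideal_gen_def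
  proof (rule span_subset)
    show "0 \<in> vball v (2 * k)" by (simp add: vb_iff)
    show "\<And>x y. x \<in> vball v (2*k) \<Longrightarrow> y \<in> vball v (2*k) \<Longrightarrow> x + y \<in> vball v (2*k)" by (rule vb_add)
    show "\<And>r x. r \<in> Ov \<Longrightarrow> x \<in> vball v (2*k) \<Longrightarrow> r * x \<in> vball v (2*k)"
      using vb_mult[of _ 0 _ "2*k"] by (simp add: O_vb)
    show "{a * b |a b. a \<in> vball v k \<and> b \<in> vball v k} \<subseteq> vball v (2 * k)"
    proof clarify
      fix a b assume "a \<in> vball v k" "b \<in> vball v k"
      then have "a * b \<in> vball v (k + k)" by (rule vb_mult)
      then show "a * b \<in> vball v (2 * k)" by (simp only: mult_2)
    qed
  qed
  show "vball v (2 * k) \<subseteq> ideal_prod v (vball v k) (vball v k)"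
  proof
    fix y assume y: "y \<in> vball v (2 * k)"
    have "y / pi powi k \<in> vball v k" using vb_div[OF y pip_nz[of k]] vpip by simp
    moreover have "pi powi k \<in> vball v k" by (rule vb_pip)
    moreover have "y = pi powi k * (y / pi powi k)" using pip_nz[of k] by simp
    ultimately have "y \<in> {a * b |a b. a \<in> vball v k \<and> b \<in> vball v k}" by blast
    then have "1 * y \<in> span_with Ov (*) {a * b |a b. a \<in> vball v k \<and> b \<in> vball v k}"
      by (rule span_mem) simp
    then show "y \<in> ideal_prod v (vball v k) (vball v k)" by (simp add: ideal_prod_def ideal_gen_def)
  qed
qed

lemma reduced_disc_O:
  assumes "disc_full v Ord = Ov"
  shows "reduced_disc v Ord = Ov"
  unfolding reduced_disc_def
proof (rule the_equality)
  show "frac_ideal v Ov \<and> ideal_prod v Ov Ov = disc_full v Ord"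
    using frac_Iid[of 0] vball_eq_Iid[of 0] ideal_prod_vball[of 0] assms by (simp add: Ov_vb)
next
  fix D assume D: "frac_ideal v D \<and> ideal_prod v D D = disc_full v Ord"
  then obtain k where k: "D = vball v k" using frac_ideal_vball by blast
  then have eq: "vball v (2 * k) = vball v 0" using D ideal_prod_vball assms by (simp add: Ov_vb)
  have "1 \<in> vball v 0" by (simp add: vb_iff v1)
  then have "1 \<in> vball v (2 * k)" using eq by simp
  then have "0 \<ge> 2 * k" by (simp add: vb_iff v1)
  moreover have "pi powi (2 * k) \<in> vball v (2 * k)" by (rule vb_pip)
  then have "pi powi (2 * k) \<in> vball v 0" using eq by simp
  then have "0 \<le> 2 * k" using pi(1) vpip[of "2*k"] by (simp add: vb_iff)
  ultimately have "k = 0" by simp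
  then show "D = Ov" using k by (simp add: Ov_vb)
qed

end


theorem theorem7p3:
  fixes v :: "'a::field_char_0 \<Rightarrow> int"
    and dg :: "'a^2^2 \<Rightarrow> 'a^2^2"
    and b :: "'a^2 \<Rightarrow> 'a^2 \<Rightarrow> 'a"
    and lam :: 'a
    and Ord :: "('a^2^2) set"
  assumes "dyadic_local_field v"
    and "orthogonal_involution dg"
    and "adapted_form dg b"
    and "lam \<in> disc_inv dg \<inter> val_ring v"
    and "ideal_gen v {lam} = iota v (disc_inv dg)"
    and "quad_defect v (- lam) \<noteq> max_ideal v"
    and "max_inv_order v dg Ord"
  shows "(\<exists>I L. frac_ideal v I \<and> modular_lattice v b I L \<and>
                Ord = End_lat L \<inter> End_lat (dual_lattice v b L)) \<and>
         reduced_disc v Ord = disc_H v \<inter> iota v (disc_inv dg) \<and>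
         disc_H v \<inter> iota v (disc_inv dg) = val_ring v"
proof -
  have dv: "discrete_valuation v" using assms(1) by (simp add: dyadic_local_field_def)
  interpret setting v dg b
    by (rule setting.intro, rule dval.intro[OF dv], rule setting_axioms.intro[OF assms(2,3)])
  have lu: "lam \<noteq> 0 \<and> v lam = 0" using lam_unit[OF assms(4,5,6)] .
  have io: "iota v (disc_inv dg) = val_ring v" using iota_eq[of lam] lu assms(5) by simp
  have evB: "even (v (det (Bs b)))"
  proof -
    obtain c where c: "c \<noteq> 0" "lam = det h0 * c\<^sup>2" using assms(4) disc_inv_eq by auto
    have "v lam = v (det h0) + 2 * v c" using c det_h0 vmult vpow[of c 2] by simp
    then have "v (det h0) = 2 * (- v c)" using lu by simp
    then have e1: "even (v (det h0))" by simp
    obtain k where k: "k \<noteq> 0" "det (Bs b) * det h0 = k\<^sup>2" using skew_key by blast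
    have "v (det (Bs b)) + v (det h0) = 2 * v k"
      using k det_Bs det_h0 vmult[of "det (Bs b)" "det h0"] vpow[of k 2] by simp
    then have "v (det (Bs b)) = 2 * v k - v (det h0)" by simp
    then show ?thesis using e1 by simp
  qed
  have inv: "inv_order v dg Ord" and maxO: "\<And>O'. inv_order v dg O' \<Longrightarrow> Ord \<subseteq> O' \<Longrightarrow> O' = Ord"
    using assms(7) unfolding max_inv_order_def by blast+
  have isO: "is_order v Ord" and dgO: "\<forall>\<sigma>\<in>Ord. dg \<sigma> \<in> Ord" using inv unfolding inv_order_def by auto
  obtain P0 where P0: "det P0 \<noteq> 0" "\<forall>\<sigma>\<in>Ord. intm (inv2 P0 ** \<sigma> ** P0)" using exists_P[OF isO] by blast
  obtain P m G' where P: "det P \<noteq> 0" "\<forall>\<sigma>\<in>Ord. intm (inv2 P ** \<sigma> ** P)" "modP P m G'"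
    using jordan[OF P0 dgO evB] by blast
  have sub: "Ord \<subseteq> End_lat (latP P)" using P(2) End_latP[OF P(1)] by blast
  have EqO: "End_lat (latP P) = Ord" using maxO[OF End_inv_order[OF P(1,3)] sub] .
  have Edual: "End_lat (dual_lattice v b (latP P)) = End_lat (latP P)"
    using dual_latP[OF P(1,3)] End_scaled[OF pip_nz[of m], of "latP P"] by simp
  have part1: "\<exists>I L. frac_ideal v I \<and> modular_lattice v b I L \<and>
                Ord = End_lat L \<inter> End_lat (dual_lattice v b L)"
    using frac_Iid[of m] modular[OF P(1,3)] EqO Edual by (intro exI[of _ "Iid m"] exI[of _ "latP P"]) simp
  have rd: "reduced_disc v Ord = val_ring v"
    using reduced_disc_O disc_full_End[OF P(1)] EqO by simp
  show ?thesis using part1 rd io by (simp add: disc_H_def)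
qed


end
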